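(* Let $n\ge 2$ and let $q\in\mathbb{C}$, $q\neq 0,\pm1$, not a root of unity. Then the assignment $$\phi(I_{i+1,i})=\tilde I_{i+1,i}\otimes 1+k_i\otimes I_{i+1,i},\qquad i=1,\dots,n-1,$$ extends to a unital algebra homomorphism $\phi:U'_q(\mathrm{so}_n)\to U_q(\mathrm{sl}_n)\otimes U'_q(\mathrm{so}_n)$ which makes $U'_q(\mathrm{so}_n)$ a (left) $U_q(\mathrm{sl}_n)$-comodule algebra, i.e. $(\Delta\otimes\mathrm{id})\circ\phi=(\mathrm{id}\otimes\phi)\circ\phi$ and $(\varepsilon\otimes\mathrm{id})\circ\phi=\mathrm{id}$. Moreover, if $\iota:U'_q(\mathrm{so}_n)\to U_q(\mathrm{sl}_n)$ denotes the algebra homomorphism $I_{i+1,i}\mapsto \tilde I_{i+1,i}$, then $(\mathrm{id}\otimes\iota)\circ\phi=\Delta\circ\iota$, i.e. the coaction $\phi$ reduces to the comultiplication $\Delta$ of $U_q(\mathrm{sl}_n)$ on the image of $U'_q(\mathrm{so}_n)$.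
   Context: Fix $q\in\mathbb{C}$, $q\ne0,\pm1$, not a root of unity, and a square root $q^{1/2}$. The algebra $U'_q(\mathrm{so}_n)$ is the unital complex associative algebra generated by $I_{21},I_{32},\dots,I_{n,n-1}$ with relations $I_{j,j-1}^2I_{j-1,j-2}+I_{j-1,j-2}I_{j,j-1}^2-(q+q^{-1})I_{j,j-1}I_{j-1,j-2}I_{j,j-1}=-I_{j-1,j-2}$, $I_{j-1,j-2}^2I_{j,j-1}+I_{j,j-1}I_{j-1,j-2}^2-(q+q^{-1})I_{j-1,j-2}I_{j,j-1}I_{j-1,j-2}=-I_{j,j-1}$, and $[I_{i,i-1},I_{j,j-1}]=0$ if $|i-j|>1$. The Drinfeld–Jimbo algebra $U_q(\mathrm{sl}_n)$ is generated by $e_i,f_i,k_i,k_i^{-1}$ ($i=1,\dots,n-1$) with relations $k_ik_i^{-1}=k_i^{-1}k_i=1$, $k_ik_j=k_jk_i$, $k_ie_jk_i^{-1}=q^{a_{ij}}e_j$, $k_if_jk_i^{-1}=q^{-a_{ij}}f_j$, $[e_i,e_j]=[f_i,f_j]=0$ for $|i-j|>1$, $[e_i,f_j]=\delta_{ij}(k_i-k_i^{-1})/(q-q^{-1})$, and the quantum Serre relations $e_i^2e_{i\pm1}-(q+q^{-1})e_ie_{i\pm1}e_i+e_{i\pm1}e_i^2=0$ and the same for $f$'s; here $a_{ii}=2$, $a_{i,i\pm1}=-1$, $a_{ij}=0$ otherwise. It is a Hopf algebra with $\Delta(e_i)=e_i\otimes k_i^{-1}+1\otimes e_i$, $\Delta(f_i)=f_i\otimes1+k_i\otimes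 f_i$, $\Delta(k_i)=k_i\otimes k_i$, counit $\varepsilon(e_i)=\varepsilon(f_i)=0$, $\varepsilon(k_i)=1$. Put $\tilde I_{i+1,i}=f_i-q^{-1}k_ie_i\in U_q(\mathrm{sl}_n)$; these elements satisfy the defining relations of $U'_q(\mathrm{so}_n)$. *)

theory Defs
  imports Complex_Main
begin

text \<open>Terms of the free unital associative complex algebra on generators of type 'x.
  Scal c stands for c times the unit.\<close>
datatype 'x fa = Gen 'x | Scal complex | Add "'x fa" "'x fa" | Mul "'x fa" "'x fa"

definition Sub :: "'x fa \<Rightarrow> 'x fa \<Rightarrow> 'x fa" where
  "Sub a b = Add a (Mul (Scal (-1)) b)"

definition Sm :: "complex \<Rightarrow> 'x fa \<Rightarrow> 'x fa" where
  "Sm c a = Mul (Scal c) a"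

text \<open>The quotient is the
  algebra presented by generators 'x and relations R.\<close>
inductive alg_eq :: "('x fa \<times> 'x fa) set \<Rightarrow> 'x fa \<Rightarrow> 'x fa \<Rightarrow> bool" for R where
  rel: "(a, b) \<in> R \<Longrightarrow> alg_eq R a b"
| refl: "alg_eq R a a"
| sym: "alg_eq R a b \<Longrightarrow> alg_eq R b a"
| trans: "alg_eq R a b \<Longrightarrow> alg_eq R b c \<Longrightarrow> alg_eq R a c"
| add_cong: "alg_eq R a a' \<Longrightarrow> alg_eq R b b' \<Longrightarrow> alg_eq R (Add a b) (Add a' b')"
| mul_cong: "alg_eq R a a' \<Longrightarrow> alg_eq R b b' \<Longrightarrow> alg_eq R (Mul a b) (Mul a' b')"
| add_assoc: "alg_eq R (Add (Add a b) c) (Add a (Add b c))"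
| add_comm: "alg_eq R (Add a b) (Add b a)"
| add_zero: "alg_eq R (Add a (Scal 0)) a"
| mul_assoc: "alg_eq R (Mul (Mul a b) c) (Mul a (Mul b c))"
| mul_one_left: "alg_eq R (Mul (Scal 1) a) a"
| mul_one_right: "alg_eq R (Mul a (Scal 1)) a"
| mul_zero: "alg_eq R (Mul (Scal 0) a) (Scal 0)"
| distrib_left: "alg_eq R (Mul a (Add b c)) (Add (Mul a b) (Mul a c))"
| distrib_right: "alg_eq R (Mul (Add a b) c) (Add (Mul a c) (Mul b c))"
| scal_add: "alg_eq R (Add (Scal x) (Scal y)) (Scal (x + y))"
| scal_mul: "alg_eq R (Mul (Scal x) (Scal y)) (Scal (x * y))"
| scal_central: "alg_eq R (Mul (Scal x) a) (Mul a (Scal x))"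

primrec subst :: "('x \<Rightarrow> 'y fa) \<Rightarrow> 'x fa \<Rightarrow> 'y fa" where
  "subst g (Gen x) = g x"
| "subst g (Scal c) = Scal c"
| "subst g (Add a b) = Add (subst g a) (subst g b)"
| "subst g (Mul a b) = Mul (subst g a) (subst g b)"

text \<open>The assignment g on generators induces a well-defined (unital algebra) homomorphism
  from the algebra presented by (X, RA) to the algebra presented by (Y, RB).\<close>
definition extends_to_hom :: "('x fa \<times> 'x fa) set \<Rightarrow> ('y fa \<times> 'y fa) set \<Rightarrow> ('x \<Rightarrow> 'y fa) \<Rightarrow> bool" where
  "extends_to_hom RA RB g \<longleftrightarrow> (\<forall>a b. alg_eq RA a b \<longrightarrow> alg_eq RB (subst g a) (subst g b))"

text \<open>Tensor product A \<otimes> B of presented algebras: generators of A (Inl) and of B (Inr),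
  the relations of both, and commutation of the two families of generators.\<close>
definition tensor_rels :: "('x fa \<times> 'x fa) set \<Rightarrow> ('y fa \<times> 'y fa) set \<Rightarrow> (('x + 'y) fa \<times> ('x + 'y) fa) set" where
  "tensor_rels RA RB =
     (\<lambda>(l, r). (map_fa Inl l, map_fa Inl r)) ` RA
   \<union> (\<lambda>(l, r). (map_fa Inr l, map_fa Inr r)) ` RB
   \<union> {(Mul (Gen (Inl x)) (Gen (Inr y)), Mul (Gen (Inr y)) (Gen (Inl x))) | x y. True}"

datatype slgen = E nat | F nat | K nat | Kinv nat

definition cartan :: "nat \<Rightarrow> nat \<Rightarrow> int" where
  "cartan i j = (if i = j then 2 else if i = j + 1 \<or> j = i + 1 then -1 else 0)"

definition sl_gen_in_range :: "nat \<Rightarrow> slgen \<Rightarrow> bool" where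
  "sl_gen_in_range n g = (case g of E i \<Rightarrow> 1 \<le> i \<and> i \<le> n - 1 | F i \<Rightarrow> 1 \<le> i \<and> i \<le> n - 1
     | K i \<Rightarrow> 1 \<le> i \<and> i \<le> n - 1 | Kinv i \<Rightarrow> 1 \<le> i \<and> i \<le> n - 1)"

text \<open>Defining relations of U_q(sl_n) (generators e_i, f_i, k_i, k_i^{-1}, 1 \<le> i \<le> n-1).
  Generators with an index outside 1..n-1 are set to 0, so the presented algebra is
  U_q(sl_n).\<close>
definition sl_rels :: "nat \<Rightarrow> complex \<Rightarrow> (slgen fa \<times> slgen fa) set" where
  "sl_rels n q =
     {(Gen g, Scal 0) | g. \<not> sl_gen_in_range n g}
   \<union> {(Mul (Gen (K i)) (Gen (Kinv i)), Scal 1) | i. 1 \<le> i \<and> i \<le> n - 1}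
   \<union> {(Mul (Gen (Kinv i)) (Gen (K i)), Scal 1) | i. 1 \<le> i \<and> i \<le> n - 1}
   \<union> {(Mul (Gen (K i)) (Gen (K j)), Mul (Gen (K j)) (Gen (K i))) | i j.
        1 \<le> i \<and> i \<le> n - 1 \<and> 1 \<le> j \<and> j \<le> n - 1}
   \<union> {(Mul (Mul (Gen (K i)) (Gen (E j))) (Gen (Kinv i)), Sm (q powi cartan i j) (Gen (E j))) | i j.
        1 \<le> i \<and> i \<le> n - 1 \<and> 1 \<le> j \<and> j \<le> n - 1}
   \<union> {(Mul (Mul (Gen (K i)) (Gen (F j))) (Gen (Kinv i)), Sm (q powi (- cartan i j)) (Gen (F j))) | i j.
        1 \<le> i \<and> i \<le> n - 1 \<and> 1 \<le> j \<and> j \<le> n - 1}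
   \<union> {(Sub (Mul (Gen (E i)) (Gen (E j))) (Mul (Gen (E j)) (Gen (E i))), Scal 0) | i j.
        1 \<le> i \<and> i \<le> n - 1 \<and> 1 \<le> j \<and> j \<le> n - 1 \<and> (i + 1 < j \<or> j + 1 < i)}
   \<union> {(Sub (Mul (Gen (F i)) (Gen (F j))) (Mul (Gen (F j)) (Gen (F i))), Scal 0) | i j.
        1 \<le> i \<and> i \<le> n - 1 \<and> 1 \<le> j \<and> j \<le> n - 1 \<and> (i + 1 < j \<or> j + 1 < i)}
   \<union> {(Sub (Mul (Gen (E i)) (Gen (F j))) (Mul (Gen (F j)) (Gen (E i))),
        Sm (if i = j then 1 / (q - inverse q) else 0) (Sub (Gen (K i)) (Gen (Kinv i)))) | i j.
        1 \<le> i \<and> i \<le> n - 1 \<and> 1 \<le> j \<and> j \<le> n - 1}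
   \<union> {(Add (Sub (Mul (Mul (Gen (E i)) (Gen (E i))) (Gen (E j)))
                 (Sm (q + inverse q) (Mul (Mul (Gen (E i)) (Gen (E j))) (Gen (E i)))))
            (Mul (Mul (Gen (E j)) (Gen (E i))) (Gen (E i))), Scal 0) | i j.
        1 \<le> i \<and> i \<le> n - 1 \<and> 1 \<le> j \<and> j \<le> n - 1 \<and> (j = i + 1 \<or> i = j + 1)}
   \<union> {(Add (Sub (Mul (Mul (Gen (F i)) (Gen (F i))) (Gen (F j)))
                 (Sm (q + inverse q) (Mul (Mul (Gen (F i)) (Gen (F j))) (Gen (F i)))))
            (Mul (Mul (Gen (F j)) (Gen (F i))) (Gen (F i))), Scal 0) | i j.
        1 \<le> i \<and> i \<le> n - 1 \<and> 1 \<le> j \<and> j \<le> n - 1 \<and> (j = i + 1 \<or> i = j + 1)}"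

definition sl_Delta :: "nat \<Rightarrow> slgen \<Rightarrow> (slgen + slgen) fa" where
  "sl_Delta n g = (if \<not> sl_gen_in_range n g then Scal 0 else (case g of
      E i \<Rightarrow> Add (Mul (Gen (Inl (E i))) (Gen (Inr (Kinv i)))) (Gen (Inr (E i)))
    | F i \<Rightarrow> Add (Gen (Inl (F i))) (Mul (Gen (Inl (K i))) (Gen (Inr (F i))))
    | K i \<Rightarrow> Mul (Gen (Inl (K i))) (Gen (Inr (K i)))
    | Kinv i \<Rightarrow> Mul (Gen (Inl (Kinv i))) (Gen (Inr (Kinv i)))))"

definition sl_eps :: "nat \<Rightarrow> slgen \<Rightarrow> complex" where
  "sl_eps n g = (if \<not> sl_gen_in_range n g then 0 else (case g of
      E i \<Rightarrow> 0 | F i \<Rightarrow> 0 | K i \<Rightarrow> 1 | Kinv i \<Rightarrow> 1))"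

text \<open>I i stands for the generator I_{i+1,i}, 1 \<le> i \<le> n-1.\<close>
datatype sogen = I nat

definition so_rels :: "nat \<Rightarrow> complex \<Rightarrow> (sogen fa \<times> sogen fa) set" where
  "so_rels n q =
     {(Gen (I i), Scal 0) | i. \<not> (1 \<le> i \<and> i \<le> n - 1)}
   \<union> {(Add (Add (Mul (Mul (Gen (I (i+1))) (Gen (I (i+1)))) (Gen (I i)))
                 (Mul (Mul (Gen (I i)) (Gen (I (i+1)))) (Gen (I (i+1)))))
            (Sm (- (q + inverse q)) (Mul (Mul (Gen (I (i+1))) (Gen (I i))) (Gen (I (i+1))))),
        Sm (-1) (Gen (I i))) | i. 1 \<le> i \<and> i + 1 \<le> n - 1}
   \<union> {(Add (Add (Mul (Mul (Gen (I i)) (Gen (I i))) (Gen (I (i+1))))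
                 (Mul (Mul (Gen (I (i+1))) (Gen (I i))) (Gen (I i))))
            (Sm (- (q + inverse q)) (Mul (Mul (Gen (I i)) (Gen (I (i+1)))) (Gen (I i)))),
        Sm (-1) (Gen (I (i+1)))) | i. 1 \<le> i \<and> i + 1 \<le> n - 1}
   \<union> {(Mul (Gen (I i)) (Gen (I j)), Mul (Gen (I j)) (Gen (I i))) | i j.
        1 \<le> i \<and> i \<le> n - 1 \<and> 1 \<le> j \<and> j \<le> n - 1 \<and> (i + 1 < j \<or> j + 1 < i)}"

definition iota_gen :: "nat \<Rightarrow> complex \<Rightarrow> sogen \<Rightarrow> slgen fa" where
  "iota_gen n q g = (case g of I i \<Rightarrow> if 1 \<le> i \<and> i \<le> n - 1
      then Sub (Gen (F i)) (Sm (inverse q) (Mul (Gen (K i)) (Gen (E i)))) else Scal 0)"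

definition phi_gen :: "nat \<Rightarrow> complex \<Rightarrow> sogen \<Rightarrow> (slgen + sogen) fa" where
  "phi_gen n q g = (case g of I i \<Rightarrow> if 1 \<le> i \<and> i \<le> n - 1
      then Add (map_fa Inl (iota_gen n q (I i))) (Mul (Gen (Inl (K i))) (Gen (Inr (I i))))
      else Scal 0)"

definition Delta_id :: "nat \<Rightarrow> slgen + sogen \<Rightarrow> ((slgen + slgen) + sogen) fa" where
  "Delta_id n g = (case g of Inl x \<Rightarrow> map_fa Inl (sl_Delta n x) | Inr y \<Rightarrow> Gen (Inr y))"

text \<open>id \<otimes> phi : U \<otimes> U' \<rightarrow> U \<otimes> (U \<otimes> U'), followed by the associativity identification
  with (U \<otimes> U) \<otimes> U'.\<close>
definition id_phi :: "nat \<Rightarrow> complex \<Rightarrow> slgen + sogen \<Rightarrow> ((slgen + slgen) + sogen) fa" where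
  "id_phi n q g = (case g of Inl x \<Rightarrow> Gen (Inl (Inl x))
     | Inr y \<Rightarrow> map_fa (\<lambda>z. case z of Inl x' \<Rightarrow> Inl (Inr x') | Inr y' \<Rightarrow> Inr y') (phi_gen n q y))"

definition eps_id :: "nat \<Rightarrow> slgen + sogen \<Rightarrow> sogen fa" where
  "eps_id n g = (case g of Inl x \<Rightarrow> Scal (sl_eps n x) | Inr y \<Rightarrow> Gen y)"

definition id_iota :: "nat \<Rightarrow> complex \<Rightarrow> slgen + sogen \<Rightarrow> (slgen + slgen) fa" where
  "id_iota n q g = (case g of Inl x \<Rightarrow> Gen (Inl x) | Inr y \<Rightarrow> map_fa Inr (iota_gen n q y))"

end

theory Submission
  imports Defs
begin


lemmas ae_intros = alg_eq.refl alg_eq.add_cong alg_eq.mul_cong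

lemma ae_trans[trans]: "alg_eq R a b \<Longrightarrow> alg_eq R b c \<Longrightarrow> alg_eq R a c"
  by (rule alg_eq.trans)

lemma ae_sym: "alg_eq R a b \<Longrightarrow> alg_eq R b a" by (rule alg_eq.sym)

lemma ae_addL: "alg_eq R a a' \<Longrightarrow> alg_eq R (Add a b) (Add a' b)"
  by (simp add: alg_eq.add_cong alg_eq.refl)
lemma ae_addR: "alg_eq R b b' \<Longrightarrow> alg_eq R (Add a b) (Add a b')"
  by (simp add: alg_eq.add_cong alg_eq.refl)
lemma ae_mulL: "alg_eq R a a' \<Longrightarrow> alg_eq R (Mul a b) (Mul a' b)"
  by (simp add: alg_eq.mul_cong alg_eq.refl)
lemma ae_mulR: "alg_eq R b b' \<Longrightarrow> alg_eq R (Mul a b) (Mul a b')"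
  by (simp add: alg_eq.mul_cong alg_eq.refl)

lemma ae_zero_add: "alg_eq R (Add (Scal 0) a) a"
  by (meson alg_eq.add_comm alg_eq.add_zero alg_eq.trans)

lemma ae_add_assoc': "alg_eq R (Add a (Add b c)) (Add (Add a b) c)"
  by (rule ae_sym, rule alg_eq.add_assoc)

lemma ae_add_lcomm: "alg_eq R (Add a (Add b c)) (Add b (Add a c))"
proof -
  have "alg_eq R (Add a (Add b c)) (Add (Add a b) c)" by (rule ae_add_assoc')
  also have "alg_eq R \<dots> (Add (Add b a) c)" by (rule ae_addL, rule alg_eq.add_comm)
  also have "alg_eq R \<dots> (Add b (Add a c))" by (rule alg_eq.add_assoc)
  finally show ?thesis .
qed

lemma ae_mul_zero_right: "alg_eq R (Mul a (Scal 0)) (Scal 0)"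
  by (meson alg_eq.mul_zero alg_eq.scal_central alg_eq.sym alg_eq.trans)

lemma ae_scal_mul_scal: "alg_eq R (Mul (Scal x) (Mul (Scal y) a)) (Mul (Scal (x*y)) a)"
  by (meson alg_eq.mul_assoc alg_eq.scal_mul ae_mulL alg_eq.sym alg_eq.trans)

lemma ae_scal_add: "alg_eq R (Add (Mul (Scal x) a) (Mul (Scal y) a)) (Mul (Scal (x+y)) a)"
  by (meson alg_eq.distrib_right alg_eq.scal_add ae_mulL alg_eq.sym alg_eq.trans)

lemma ae_scal_left_in: "alg_eq R (Mul a (Mul (Scal x) b)) (Mul (Scal x) (Mul a b))"
proof -
  have "alg_eq R (Mul a (Mul (Scal x) b)) (Mul (Mul a (Scal x)) b)" by (rule ae_sym, rule alg_eq.mul_assoc)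
  also have "alg_eq R \<dots> (Mul (Mul (Scal x) a) b)" by (rule ae_mulL, rule ae_sym, rule alg_eq.scal_central)
  also have "alg_eq R \<dots> (Mul (Scal x) (Mul a b))" by (rule alg_eq.mul_assoc)
  finally show ?thesis .
qed

lemma ae_scal_eq: "x = y \<Longrightarrow> alg_eq R (Mul (Scal x) a) (Mul (Scal y) a)"
  by (simp add: alg_eq.refl)

lemma ae_mul_scal0_any: "x = 0 \<Longrightarrow> alg_eq R (Mul (Scal x) a) (Scal 0)"
  by (simp add: alg_eq.mul_zero)

lemma ae_eq_from_diff:
  assumes "alg_eq R (Add a (Mul (Scal (-1)) b)) (Scal 0)"
  shows "alg_eq R a b"
proof -
  have "alg_eq R a (Add a (Scal 0))" by (rule ae_sym, rule alg_eq.add_zero)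
  also have "alg_eq R \<dots> (Add a (Add (Mul (Scal (-1)) b) b))"
  proof (rule ae_addR)
    have "alg_eq R (Add (Mul (Scal (-1)) b) b) (Add (Mul (Scal (-1)) b) (Mul (Scal 1) b))"
      by (rule ae_addR, rule ae_sym, rule alg_eq.mul_one_left)
    also have "alg_eq R \<dots> (Mul (Scal (-1 + 1)) b)" by (rule ae_scal_add)
    also have "alg_eq R \<dots> (Scal 0)" by (simp add: alg_eq.mul_zero)
    finally show "alg_eq R (Scal 0) (Add (Mul (Scal (-1)) b) b)" by (rule ae_sym)
  qed
  also have "alg_eq R \<dots> (Add (Add a (Mul (Scal (-1)) b)) b)" by (rule ae_add_assoc')
  also have "alg_eq R \<dots> (Add (Scal 0) b)" by (rule ae_addL, rule assms)
  also have "alg_eq R \<dots> b" by (rule ae_zero_add)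
  finally show ?thesis .
qed

lemma subst_subst: "subst f (subst g a) = subst (\<lambda>x. subst f (g x)) a"
  by (induction a) auto

lemma map_fa_subst: "map_fa f a = subst (\<lambda>x. Gen (f x)) a"
  by (induction a) auto

lemma subst_hom:
  assumes "\<And>l r. (l, r) \<in> R1 \<Longrightarrow> alg_eq R2 (subst h l) (subst h r)"
  shows "alg_eq R1 a b \<Longrightarrow> alg_eq R2 (subst h a) (subst h b)"
proof (induction rule: alg_eq.induct)
  case (rel a b) then show ?case using assms by auto
qed (auto intro: alg_eq.intros)

lemma subst_cong_pointwise:
  assumes "\<And>x. alg_eq R (f x) (g x)"
  shows "alg_eq R (subst f a) (subst g a)"
  by (induction a) (auto intro: alg_eq.intros assms)

lemma ae_mono_rels:
  assumes "R1 \<subseteq> R2" "alg_eq R1 a b" shows "alg_eq R2 a b"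
  using assms(2) by induction (auto intro: alg_eq.intros assms(1)[THEN subsetD])


section \<open>Laurent polynomial coefficients\<close>

type_synonym lp = "(int \<times> int) list"

fun lp_add :: "lp \<Rightarrow> lp \<Rightarrow> lp" where
  "lp_add [] p = p"
| "lp_add (m#p) [] = m#p"
| "lp_add ((e1,c1)#p1) ((e2,c2)#p2) = (if e1 < e2 then (e1,c1) # lp_add p1 ((e2,c2)#p2)
     else if e2 < e1 then (e2,c2) # lp_add ((e1,c1)#p1) p2
     else if c1 + c2 = 0 then lp_add p1 p2 else (e1, c1+c2) # lp_add p1 p2)"

fun lp_ev :: "complex \<Rightarrow> lp \<Rightarrow> complex" where
  "lp_ev q [] = 0"
| "lp_ev q ((e,c)#p) = of_int c * q powi e + lp_ev q p"

definition lp_mul :: "lp \<Rightarrow> lp \<Rightarrow> lp" where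
  "lp_mul p r = foldr (\<lambda>(e,c) acc. lp_add (map (\<lambda>(e',c'). (e+e', c*c')) r) acc) p []"

lemma lp_ev_add: "lp_ev q (lp_add a b) = lp_ev q a + lp_ev q b"
proof (induction a b rule: lp_add.induct)
  case (1 p) then show ?case by simp
next
  case (2 m p) then show ?case by (cases m) simp
next
  case (3 e1 c1 p1 e2 c2 p2)
  note IH = this
  consider "e1 < e2" | "e2 < e1" | "e1 = e2 \<and> c1 + c2 = 0" | "e1 = e2 \<and> c1 + c2 \<noteq> 0" by linarith
  then show ?case
  proof cases
    case 1 then show ?thesis using IH by simp
  next
    case 2 then show ?thesis using IH by simp
  next
    case 3
    then have c2: "c2 = - c1" and e: "e2 = e1" by simp_all
    have h: "lp_ev q (lp_add ((e1,c1)#p1) ((e2,c2)#p2)) = lp_ev q (lp_add p1 p2)"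
      using 3 by simp
    show ?thesis unfolding h using IH c2 e by simp
  next
    case 4
    then have h0: "lp_ev q (lp_add ((e1,c1)#p1) ((e2,c2)#p2)) = of_int (c1+c2) * q powi e1 + lp_ev q (lp_add p1 p2)"
      by simp
    show ?thesis unfolding h0 using IH 4 by (simp add: algebra_simps)
  qed
qed

lemma lp_ev_map: "q \<noteq> 0 \<Longrightarrow> lp_ev q (map (\<lambda>(e',c'). (e+e', c*c')) r) = of_int c * q powi e * lp_ev q r"
  by (induction r) (auto simp: power_int_add algebra_simps)

lemma lp_ev_mul: "q \<noteq> 0 \<Longrightarrow> lp_ev q (lp_mul a b) = lp_ev q a * lp_ev q b"
  by (induction a) (auto simp: lp_mul_def lp_ev_add lp_ev_map algebra_simps)

type_synonym cf = "nat \<times> lp"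

definition lp_D :: lp where "lp_D = [(0,-1),(2,1)]"

fun dpow :: "nat \<Rightarrow> lp" where
  "dpow 0 = [(0,1)]"
| "dpow (Suc k) = lp_mul lp_D (dpow k)"

lemma lp_ev_dpow: "q \<noteq> 0 \<Longrightarrow> lp_ev q (dpow k) = (q^2 - 1)^k"
  by (induction k) (auto simp: lp_ev_mul lp_D_def power2_eq_square)

fun cf_ev :: "complex \<Rightarrow> cf \<Rightarrow> complex" where
  "cf_ev q (k, p) = lp_ev q p / (q^2 - 1)^k"

fun cf_add :: "cf \<Rightarrow> cf \<Rightarrow> cf" where
  "cf_add (k1,p1) (k2,p2) = (if k1 = k2 then (k1, lp_add p1 p2) else
     (max k1 k2, lp_add (lp_mul (dpow (max k1 k2 - k1)) p1) (lp_mul (dpow (max k1 k2 - k2)) p2)))"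

fun cf_mul :: "cf \<Rightarrow> cf \<Rightarrow> cf" where
  "cf_mul (k1,p1) (k2,p2) = (k1 + k2, lp_mul p1 p2)"

definition cf_one :: cf where "cf_one = (0, [(0,1)])"

locale qgood =
  fixes q :: complex
  assumes q0: "q \<noteq> 0" and q1: "q^2 \<noteq> 1"
begin

lemma d0: "(q^2 - 1) \<noteq> 0" using q1 by simp

lemma cf_ev_add: "cf_ev q (cf_add a b) = cf_ev q a + cf_ev q b"
proof -
  obtain k1 p1 k2 p2 where a: "a = (k1,p1)" and b: "b = (k2,p2)" by fastforce
  show ?thesis
  proof (cases "k1 = k2")
    case True then show ?thesis by (simp add: a b lp_ev_add add_divide_distrib)
  next
    case False
    define k where "k = max k1 k2"
    define D where "D = q^2 - (1::complex)"
    have D0: "D \<noteq> 0" using d0 by (simp add: D_def)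
    have g: "D^(k - j) * A / D^k = A / D^j" if "j \<le> k" for j A
    proof -
      have "D^(k - j) = D^k / D^j" using D0 that by (simp add: power_diff)
      then show ?thesis using D0 by simp
    qed
    have ca: "cf_add a b = (k, lp_add (lp_mul (dpow (k-k1)) p1) (lp_mul (dpow (k-k2)) p2))"
      using False by (simp add: a b k_def)
    have "cf_ev q (cf_add a b) = (D^(k - k1) * lp_ev q p1 + D^(k - k2) * lp_ev q p2) / D^k"
      unfolding ca by (simp only: cf_ev.simps lp_ev_add lp_ev_mul[OF q0] lp_ev_dpow[OF q0] D_def[symmetric])
    also have "\<dots> = D^(k - k1) * lp_ev q p1 / D^k + D^(k - k2) * lp_ev q p2 / D^k"
      by (rule add_divide_distrib)
    also have "\<dots> = lp_ev q p1 / D^k1 + lp_ev q p2 / D^k2"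
    proof -
      have le1: "k1 \<le> k" and le2: "k2 \<le> k" by (simp_all add: k_def)
      show ?thesis by (simp only: g[OF le1] g[OF le2])
    qed
    also have "\<dots> = cf_ev q a + cf_ev q b" by (simp only: a b D_def cf_ev.simps)
    finally show ?thesis .
  qed
qed

lemma cf_ev_mul: "cf_ev q (cf_mul a b) = cf_ev q a * cf_ev q b"
proof -
  obtain k1 p1 k2 p2 where a: "a = (k1,p1)" and b: "b = (k2,p2)" by fastforce
  have "cf_ev q (cf_mul a b) = (lp_ev q p1 * lp_ev q p2) / ((q^2-1)^k1 * (q^2-1)^k2)"
    by (simp add: a b lp_ev_mul q0 power_add)
  also have "\<dots> = cf_ev q a * cf_ev q b" by (simp only: a b cf_ev.simps times_divide_times_eq)
  finally show ?thesis .
qed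

lemma cf_ev_zero: "snd c = [] \<Longrightarrow> cf_ev q c = 0"
  by (cases c) simp

lemma cf_ev_one: "cf_ev q cf_one = 1"
  by (simp add: cf_one_def)

end


section \<open>Noncommutative polynomials with cf coefficients\<close>

fun wlt :: "nat list \<Rightarrow> nat list \<Rightarrow> bool" where
  "wlt [] [] = False"
| "wlt [] (y#ys) = True"
| "wlt (x#xs) [] = False"
| "wlt (x#xs) (y#ys) = (x < y \<or> (x = y \<and> wlt xs ys))"

type_synonym np = "(nat list \<times> cf) list"

fun np_add :: "np \<Rightarrow> np \<Rightarrow> np" where
  "np_add [] p = p"
| "np_add (m#p) [] = m#p"
| "np_add ((w1,c1)#p1) ((w2,c2)#p2) = (if wlt w1 w2 then (w1,c1) # np_add p1 ((w2,c2)#p2)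
     else if w1 = w2 then (let c = cf_add c1 c2 in if snd c = [] then np_add p1 p2 else (w1,c) # np_add p1 p2)
     else (w2,c2) # np_add ((w1,c1)#p1) p2)"

fun wd :: "(nat \<Rightarrow> 'y fa) \<Rightarrow> nat list \<Rightarrow> 'y fa" where
  "wd h [] = Scal 1"
| "wd h (x#xs) = Mul (h x) (wd h xs)"

fun np_ev :: "complex \<Rightarrow> (nat \<Rightarrow> 'y fa) \<Rightarrow> np \<Rightarrow> 'y fa" where
  "np_ev q h [] = Scal 0"
| "np_ev q h ((w,c)#p) = Add (Mul (Scal (cf_ev q c)) (wd h w)) (np_ev q h p)"

definition np_of_list :: "np \<Rightarrow> np" where
  "np_of_list L = foldr (\<lambda>m acc. np_add [m] acc) L []"

definition np_wrap :: "cf \<Rightarrow> nat list \<Rightarrow> np \<Rightarrow> nat list \<Rightarrow> np" where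
  "np_wrap c u r v = map (\<lambda>(w,c'). (u@w@v, cf_mul c c')) r"

definition np_mul :: "np \<Rightarrow> np \<Rightarrow> np" where
  "np_mul p r = foldr (\<lambda>(w,c) acc. np_add (np_of_list (np_wrap c w r [])) acc) p []"

datatype ct = CG nat | CS cf | CA ct ct | CM ct ct

fun np_of_ct :: "ct \<Rightarrow> np" where
  "np_of_ct (CG x) = [([x], cf_one)]"
| "np_of_ct (CS c) = (if snd c = [] then [] else [([], c)])"
| "np_of_ct (CA a b) = np_add (np_of_ct a) (np_of_ct b)"
| "np_of_ct (CM a b) = np_mul (np_of_ct a) (np_of_ct b)"

fun ct_ev :: "complex \<Rightarrow> (nat \<Rightarrow> 'y fa) \<Rightarrow> ct \<Rightarrow> 'y fa" where
  "ct_ev q h (CG x) = h x"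
| "ct_ev q h (CS c) = Scal (cf_ev q c)"
| "ct_ev q h (CA a b) = Add (ct_ev q h a) (ct_ev q h b)"
| "ct_ev q h (CM a b) = Mul (ct_ev q h a) (ct_ev q h b)"

fun prefix_rest :: "nat list \<Rightarrow> nat list \<Rightarrow> nat list option" where
  "prefix_rest [] w = Some w"
| "prefix_rest (x#l) [] = None"
| "prefix_rest (x#l) (y#w) = (if x = y then prefix_rest l w else None)"

fun find_split :: "nat list \<Rightarrow> nat list \<Rightarrow> (nat list \<times> nat list) option" where
  "find_split l [] = (case prefix_rest l [] of Some v \<Rightarrow> Some ([], v) | None \<Rightarrow> None)"
| "find_split l (x#w) = (case prefix_rest l (x#w) of Some v \<Rightarrow> Some ([], v)
     | None \<Rightarrow> (case find_split l w of None \<Rightarrow> None | Some (u,v) \<Rightarrow> Some (x#u, v)))"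

fun rw_word :: "(nat list \<times> np) list \<Rightarrow> nat list \<Rightarrow> (nat list \<times> np \<times> nat list) option" where
  "rw_word [] w = None"
| "rw_word ((l,r)#rs) w = (case find_split l w of Some (u,v) \<Rightarrow> Some (u,r,v) | None \<Rightarrow> rw_word rs w)"

fun red_mono :: "(nat list \<times> np) list \<Rightarrow> nat list \<times> cf \<Rightarrow> np" where
  "red_mono rs (w,c) = (case rw_word rs w of None \<Rightarrow> [(w,c)] | Some (u,r,v) \<Rightarrow> np_of_list (np_wrap c u r v))"

definition pass :: "(nat list \<times> np) list \<Rightarrow> np \<Rightarrow> np" where
  "pass rs p = foldr (\<lambda>m acc. np_add (red_mono rs m) acc) p []"

fun red :: "(nat list \<times> np) list \<Rightarrow> nat \<Rightarrow> np \<Rightarrow> np" where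
  "red rs 0 p = p"
| "red rs (Suc k) p = (if p = [] then [] else red rs k (pass rs p))"

definition rules_ok :: "('y fa \<times> 'y fa) set \<Rightarrow> complex \<Rightarrow> (nat \<Rightarrow> 'y fa) \<Rightarrow> (nat list \<times> np) list \<Rightarrow> bool" where
  "rules_ok R q h rs \<longleftrightarrow> (\<forall>(l,r)\<in>set rs. alg_eq R (wd h l) (np_ev q h r))"

lemma wlt_irrefl[simp]: "\<not> wlt w w"
  by (induction w) auto

lemma prefix_rest_Some: "prefix_rest l w = Some v \<Longrightarrow> w = l @ v"
  by (induction l w rule: prefix_rest.induct) (auto split: if_splits)

lemma find_split_Some: "find_split l w = Some (u,v) \<Longrightarrow> w = u @ l @ v"
proof (induction l w arbitrary: u v rule: find_split.induct)
  case (1 l) then show ?case by (auto split: option.splits dest: prefix_rest_Some)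
next
  case (2 l x w) then show ?case by (auto split: option.splits dest: prefix_rest_Some)
qed

lemma rw_word_Some: "rw_word rs w = Some (u,r,v) \<Longrightarrow> \<exists>l. (l,r) \<in> set rs \<and> w = u @ l @ v"
  by (induction rs w rule: rw_word.induct) (auto split: option.splits dest: find_split_Some)

lemma ae_swap4: "alg_eq R (Add (Add a b) (Add c d)) (Add (Add a c) (Add b d))"
proof -
  have "alg_eq R (Add (Add a b) (Add c d)) (Add a (Add b (Add c d)))" by (rule alg_eq.add_assoc)
  also have "alg_eq R \<dots> (Add a (Add c (Add b d)))" by (rule ae_addR, rule ae_add_lcomm)
  also have "alg_eq R \<dots> (Add (Add a c) (Add b d))" by (rule ae_add_assoc')
  finally show ?thesis .
qed

lemma ae_add_zero': "alg_eq R a (Add a (Scal 0))"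
  by (rule ae_sym, rule alg_eq.add_zero)

lemma wd_append: "alg_eq R (wd h (u@v)) (Mul (wd h u) (wd h v))"
proof (induction u)
  case Nil then show ?case by (simp, rule ae_sym, rule alg_eq.mul_one_left)
next
  case (Cons x u)
  have "alg_eq R (wd h ((x#u)@v)) (Mul (h x) (Mul (wd h u) (wd h v)))"
    by (simp, rule ae_mulR, rule Cons)
  also have "alg_eq R \<dots> (Mul (Mul (h x) (wd h u)) (wd h v))" by (rule ae_sym, rule alg_eq.mul_assoc)
  finally show ?case by simp
qed

lemma ae_z_add: "alg_eq R (Mul S (Mul U (Mul (Add a b) V))) (Add (Mul S (Mul U (Mul a V))) (Mul S (Mul U (Mul b V))))"
proof -
  have "alg_eq R (Mul S (Mul U (Mul (Add a b) V))) (Mul S (Mul U (Add (Mul a V) (Mul b V))))"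
    by (rule ae_mulR, rule ae_mulR, rule alg_eq.distrib_right)
  also have "alg_eq R \<dots> (Mul S (Add (Mul U (Mul a V)) (Mul U (Mul b V))))"
    by (rule ae_mulR, rule alg_eq.distrib_left)
  also have "alg_eq R \<dots> (Add (Mul S (Mul U (Mul a V))) (Mul S (Mul U (Mul b V))))"
    by (rule alg_eq.distrib_left)
  finally show ?thesis .
qed

lemma ae_z_zero: "alg_eq R (Mul S (Mul U (Mul (Scal 0) V))) (Scal 0)"
proof -
  have "alg_eq R (Mul S (Mul U (Mul (Scal 0) V))) (Mul S (Mul U (Scal 0)))"
    by (rule ae_mulR, rule ae_mulR, rule alg_eq.mul_zero)
  also have "alg_eq R \<dots> (Mul S (Scal 0))" by (rule ae_mulR, rule ae_mul_zero_right)
  also have "alg_eq R \<dots> (Scal 0)" by (rule ae_mul_zero_right)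
  finally show ?thesis .
qed

lemma ae_z_sc: "alg_eq R (Mul (Scal s) (Mul U (Mul (Mul (Scal t) W) V))) (Mul (Scal (s*t)) (Mul U (Mul W V)))"
proof -
  have "alg_eq R (Mul (Scal s) (Mul U (Mul (Mul (Scal t) W) V))) (Mul (Scal s) (Mul U (Mul (Scal t) (Mul W V))))"
    by (rule ae_mulR, rule ae_mulR, rule alg_eq.mul_assoc)
  also have "alg_eq R \<dots> (Mul (Scal s) (Mul (Scal t) (Mul U (Mul W V))))"
    by (rule ae_mulR, rule ae_scal_left_in)
  also have "alg_eq R \<dots> (Mul (Scal (s*t)) (Mul U (Mul W V)))" by (rule ae_scal_mul_scal)
  finally show ?thesis .
qed

context qgood
begin

lemma np_add_sound: "alg_eq R (np_ev q h (np_add a b)) (Add (np_ev q h a) (np_ev q h b))"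
proof (induction a b rule: np_add.induct)
  case (1 p) then show ?case by (simp, rule ae_sym, rule ae_zero_add)
next
  case (2 m p) then show ?case by (simp, rule ae_add_zero')
next
  case (3 w1 c1 p1 w2 c2 p2)
  note IH = this
  let ?M1 = "Mul (Scal (cf_ev q c1)) (wd h w1)"
  let ?M2 = "Mul (Scal (cf_ev q c2)) (wd h w2)"
  let ?P1 = "np_ev q h p1"
  let ?P2 = "np_ev q h p2"
  consider "wlt w1 w2" | "\<not> wlt w1 w2 \<and> w1 = w2 \<and> snd (cf_add c1 c2) = []"
    | "\<not> wlt w1 w2 \<and> w1 = w2 \<and> snd (cf_add c1 c2) \<noteq> []" | "\<not> wlt w1 w2 \<and> w1 \<noteq> w2" by blast
  then show ?case
  proof cases
    case 1
    then have "np_ev q h (np_add ((w1,c1)#p1) ((w2,c2)#p2)) = Add ?M1 (np_ev q h (np_add p1 ((w2,c2)#p2)))"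
      by simp
    also have "alg_eq R \<dots> (Add ?M1 (Add ?P1 (np_ev q h ((w2,c2)#p2))))"
      using 1 IH by (intro ae_addR) simp
    also have "alg_eq R \<dots> (Add (np_ev q h ((w1,c1)#p1)) (np_ev q h ((w2,c2)#p2)))"
      by (simp, rule ae_add_assoc')
    finally show ?thesis .
  next
    case 2
    then have "np_ev q h (np_add ((w1,c1)#p1) ((w2,c2)#p2)) = np_ev q h (np_add p1 p2)"
      by (simp add: Let_def)
    also have "alg_eq R \<dots> (Add ?P1 ?P2)" using 2 IH by simp
    also have "alg_eq R \<dots> (Add (Scal 0) (Add ?P1 ?P2))" by (rule ae_sym, rule ae_zero_add)
    also have "alg_eq R \<dots> (Add (Mul (Scal (cf_ev q c1 + cf_ev q c2)) (wd h w1)) (Add ?P1 ?P2))"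
    proof (rule ae_addL)
      have "cf_ev q c1 + cf_ev q c2 = 0" using 2 cf_ev_add[of c1 c2] cf_ev_zero by simp
      then show "alg_eq R (Scal 0) (Mul (Scal (cf_ev q c1 + cf_ev q c2)) (wd h w1))"
        by (simp add: ae_sym alg_eq.mul_zero)
    qed
    also have "alg_eq R \<dots> (Add (Add ?M1 ?M2) (Add ?P1 ?P2))"
    proof -
      have ww: "w2 = w1" using 2 by simp
      show ?thesis unfolding ww by (rule ae_addL, rule ae_sym, rule ae_scal_add)
    qed
    also have "alg_eq R \<dots> (Add (Add ?M1 ?P1) (Add ?M2 ?P2))" by (rule ae_swap4)
    finally show ?thesis by simp
  next
    case 3
    then have "np_ev q h (np_add ((w1,c1)#p1) ((w2,c2)#p2)) =
       Add (Mul (Scal (cf_ev q c1 + cf_ev q c2)) (wd h w1)) (np_ev q h (np_add p1 p2))"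
      by (simp add: Let_def cf_ev_add)
    also have "alg_eq R \<dots> (Add (Mul (Scal (cf_ev q c1 + cf_ev q c2)) (wd h w1)) (Add ?P1 ?P2))"
      using 3 IH by (intro ae_addR) simp
    also have "alg_eq R \<dots> (Add (Add ?M1 ?M2) (Add ?P1 ?P2))"
    proof -
      have ww: "w2 = w1" using 3 by simp
      show ?thesis unfolding ww by (rule ae_addL, rule ae_sym, rule ae_scal_add)
    qed
    also have "alg_eq R \<dots> (Add (Add ?M1 ?P1) (Add ?M2 ?P2))" by (rule ae_swap4)
    finally show ?thesis by simp
  next
    case 4
    then have "np_ev q h (np_add ((w1,c1)#p1) ((w2,c2)#p2)) = Add ?M2 (np_ev q h (np_add ((w1,c1)#p1) p2))"
      by simp
    also have "alg_eq R \<dots> (Add ?M2 (Add (np_ev q h ((w1,c1)#p1)) ?P2))"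
      using 4 IH by (intro ae_addR) simp
    also have "alg_eq R \<dots> (Add (np_ev q h ((w1,c1)#p1)) (Add ?M2 ?P2))" by (rule ae_add_lcomm)
    finally show ?thesis by simp
  qed
qed

lemma np_of_list_sound: "alg_eq R (np_ev q h (np_of_list L)) (np_ev q h L)"
proof (induction L)
  case Nil then show ?case by (simp add: np_of_list_def alg_eq.refl)
next
  case (Cons m L)
  obtain w c where m: "m = (w,c)" by (rule prod.exhaust)
  have "np_ev q h (np_of_list (m#L)) = np_ev q h (np_add [m] (np_of_list L))" by (simp add: np_of_list_def)
  also have "alg_eq R \<dots> (Add (np_ev q h [m]) (np_ev q h (np_of_list L)))" by (rule np_add_sound)
  also have "alg_eq R \<dots> (Add (np_ev q h [m]) (np_ev q h L))" by (rule ae_addR, rule Cons)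
  also have "alg_eq R \<dots> (np_ev q h (m#L))" by (simp add: m, rule ae_addL, rule alg_eq.add_zero)
  finally show ?case .
qed

lemma np_wrap_sound: "alg_eq R (np_ev q h (np_wrap c u r v))
   (Mul (Scal (cf_ev q c)) (Mul (wd h u) (Mul (np_ev q h r) (wd h v))))"
proof (induction r)
  case Nil then show ?case by (simp add: np_wrap_def, rule ae_sym, rule ae_z_zero)
next
  case (Cons m r)
  obtain w c' where m: "m = (w,c')" by (rule prod.exhaust)
  have "np_ev q h (np_wrap c u (m#r) v) = Add (Mul (Scal (cf_ev q c * cf_ev q c')) (wd h (u@w@v))) (np_ev q h (np_wrap c u r v))"
    by (simp add: np_wrap_def m cf_ev_mul)
  also have "alg_eq R \<dots> (Add (Mul (Scal (cf_ev q c * cf_ev q c')) (Mul (wd h u) (Mul (wd h w) (wd h v))))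
       (Mul (Scal (cf_ev q c)) (Mul (wd h u) (Mul (np_ev q h r) (wd h v)))))"
  proof (rule alg_eq.add_cong[OF ae_mulR Cons])
    have "alg_eq R (wd h (u@w@v)) (Mul (wd h u) (wd h (w@v)))" by (rule wd_append)
    also have "alg_eq R \<dots> (Mul (wd h u) (Mul (wd h w) (wd h v)))" by (rule ae_mulR, rule wd_append)
    finally show "alg_eq R (wd h (u@w@v)) (Mul (wd h u) (Mul (wd h w) (wd h v)))" .
  qed
  also have "alg_eq R \<dots> (Add (Mul (Scal (cf_ev q c)) (Mul (wd h u) (Mul (Mul (Scal (cf_ev q c')) (wd h w)) (wd h v))))
       (Mul (Scal (cf_ev q c)) (Mul (wd h u) (Mul (np_ev q h r) (wd h v)))))"
    by (rule ae_addL, rule ae_sym, rule ae_z_sc)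
  also have "alg_eq R \<dots> (Mul (Scal (cf_ev q c)) (Mul (wd h u) (Mul (np_ev q h (m#r)) (wd h v))))"
    by (simp add: m, rule ae_sym, rule ae_z_add)
  finally show ?case .
qed

lemma np_mul_sound: "alg_eq R (np_ev q h (np_mul p r)) (Mul (np_ev q h p) (np_ev q h r))"
proof (induction p)
  case Nil then show ?case by (simp add: np_mul_def, rule ae_sym, rule alg_eq.mul_zero)
next
  case (Cons m p)
  obtain w c where m: "m = (w,c)" by (rule prod.exhaust)
  have "np_ev q h (np_mul (m#p) r) = np_ev q h (np_add (np_of_list (np_wrap c w r [])) (np_mul p r))"
    by (simp add: np_mul_def m)
  also have "alg_eq R \<dots> (Add (np_ev q h (np_of_list (np_wrap c w r []))) (np_ev q h (np_mul p r)))"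
    by (rule np_add_sound)
  also have "alg_eq R \<dots> (Add (Mul (Scal (cf_ev q c)) (Mul (wd h w) (Mul (np_ev q h r) (Scal 1)))) (Mul (np_ev q h p) (np_ev q h r)))"
    using alg_eq.add_cong[OF ae_trans[OF np_of_list_sound[where R=R and h=h] np_wrap_sound[where R=R and h=h and c=c and u=w and r=r and v="[]"]] Cons] by simp
  also have "alg_eq R \<dots> (Add (Mul (Mul (Scal (cf_ev q c)) (wd h w)) (np_ev q h r)) (Mul (np_ev q h p) (np_ev q h r)))"
  proof (rule ae_addL)
    have "alg_eq R (Mul (Scal (cf_ev q c)) (Mul (wd h w) (Mul (np_ev q h r) (Scal 1))))
        (Mul (Scal (cf_ev q c)) (Mul (wd h w) (np_ev q h r)))"
      by (rule ae_mulR, rule ae_mulR, rule alg_eq.mul_one_right)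
    also have "alg_eq R \<dots> (Mul (Mul (Scal (cf_ev q c)) (wd h w)) (np_ev q h r))"
      by (rule ae_sym, rule alg_eq.mul_assoc)
    finally show "alg_eq R (Mul (Scal (cf_ev q c)) (Mul (wd h w) (Mul (np_ev q h r) (Scal 1))))
        (Mul (Mul (Scal (cf_ev q c)) (wd h w)) (np_ev q h r))" .
  qed
  also have "alg_eq R \<dots> (Mul (np_ev q h (m#p)) (np_ev q h r))"
    by (simp add: m, rule ae_sym, rule alg_eq.distrib_right)
  finally show ?case .
qed

lemma np_of_ct_sound: "alg_eq R (np_ev q h (np_of_ct t)) (ct_ev q h t)"
proof (induction t)
  case (CG x)
  have "alg_eq R (Add (Mul (Scal 1) (Mul (h x) (Scal 1))) (Scal 0)) (Mul (Scal 1) (Mul (h x) (Scal 1)))"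
    by (rule alg_eq.add_zero)
  also have "alg_eq R \<dots> (Mul (h x) (Scal 1))" by (rule alg_eq.mul_one_left)
  also have "alg_eq R \<dots> (h x)" by (rule alg_eq.mul_one_right)
  finally show ?case by (simp add: cf_ev_one)
next
  case (CS c)
  show ?case
  proof (cases "snd c = []")
    case True then show ?thesis by (simp add: cf_ev_zero alg_eq.refl)
  next
    case False
    have "alg_eq R (Add (Mul (Scal (cf_ev q c)) (Scal 1)) (Scal 0)) (Mul (Scal (cf_ev q c)) (Scal 1))"
      by (rule alg_eq.add_zero)
    also have "alg_eq R \<dots> (Scal (cf_ev q c))" by (rule alg_eq.mul_one_right)
    finally show ?thesis using False by simp
  qed
next
  case (CA a b) then show ?case by (simp, meson np_add_sound alg_eq.add_cong ae_trans)
next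
  case (CM a b) then show ?case by (simp, meson np_mul_sound alg_eq.mul_cong ae_trans)
qed

lemma red_mono_sound:
  assumes ok: "rules_ok R q h rs"
  shows "alg_eq R (Mul (Scal (cf_ev q c)) (wd h w)) (np_ev q h (red_mono rs (w,c)))"
proof (cases "rw_word rs w")
  case None
  then have e: "red_mono rs (w,c) = [(w,c)]" by simp
  show ?thesis unfolding e np_ev.simps by (rule ae_add_zero')
next
  case (Some t)
  then obtain u r v where t: "rw_word rs w = Some (u,r,v)" by (cases t) auto
  then obtain l where l: "(l,r) \<in> set rs" and w: "w = u @ l @ v" using rw_word_Some by blast
  have lr: "alg_eq R (wd h l) (np_ev q h r)" using ok l by (auto simp: rules_ok_def)
  have "alg_eq R (Mul (Scal (cf_ev q c)) (wd h w)) (Mul (Scal (cf_ev q c)) (Mul (wd h u) (Mul (wd h l) (wd h v))))"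
    unfolding w by (rule ae_mulR, rule ae_trans[OF wd_append ae_mulR[OF wd_append]])
  also have "alg_eq R \<dots> (Mul (Scal (cf_ev q c)) (Mul (wd h u) (Mul (np_ev q h r) (wd h v))))"
    by (rule ae_mulR, rule ae_mulR, rule ae_mulL, rule lr)
  also have "alg_eq R \<dots> (np_ev q h (np_wrap c u r v))" by (rule ae_sym, rule np_wrap_sound)
  also have "alg_eq R \<dots> (np_ev q h (np_of_list (np_wrap c u r v)))" by (rule ae_sym, rule np_of_list_sound)
  finally show ?thesis using t by simp
qed

lemma pass_sound:
  assumes ok: "rules_ok R q h rs"
  shows "alg_eq R (np_ev q h p) (np_ev q h (pass rs p))"
proof (induction p)
  case Nil then show ?case by (simp add: pass_def alg_eq.refl)
next
  case (Cons m p)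
  obtain w c where m: "m = (w,c)" by (rule prod.exhaust)
  have "alg_eq R (np_ev q h (m#p)) (Add (np_ev q h (red_mono rs m)) (np_ev q h (pass rs p)))"
    unfolding m np_ev.simps by (rule alg_eq.add_cong[OF red_mono_sound[OF ok] Cons])
  also have "alg_eq R \<dots> (np_ev q h (pass rs (m#p)))"
    by (simp add: pass_def, rule ae_sym, rule np_add_sound)
  finally show ?case .
qed

lemma red_sound:
  assumes ok: "rules_ok R q h rs"
  shows "alg_eq R (np_ev q h p) (np_ev q h (red rs k p))"
proof (induction k arbitrary: p)
  case 0 then show ?case by (simp add: alg_eq.refl)
next
  case (Suc k) then show ?case
    by (cases "p = []") (auto simp: alg_eq.refl intro: ae_trans[OF pass_sound[OF ok]])
qed

theorem engine:
  assumes ok: "rules_ok R q h rs" and z: "red rs k (np_of_ct t) = []"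
  shows "alg_eq R (ct_ev q h t) (Scal 0)"
proof -
  have "alg_eq R (ct_ev q h t) (np_ev q h (np_of_ct t))" by (rule ae_sym, rule np_of_ct_sound)
  also have "alg_eq R \<dots> (np_ev q h (red rs k (np_of_ct t)))" by (rule red_sound[OF ok])
  finally show ?thesis using z by simp
qed

end


abbreviation "rg n a \<equiv> 1 \<le> a \<and> a \<le> n - 1"

lemma ae_RA: "alg_eq R (Mul (Mul x y) (Mul z w)) (Mul x (Mul (Mul y z) w))"
  by (meson alg_eq.mul_assoc ae_mulR ae_sym ae_trans)

lemma ae_scal_cancel:
  assumes "alg_eq R a (Mul (Scal s) b)" "s \<noteq> 0"
  shows "alg_eq R b (Mul (Scal (inverse s)) a)"
proof -
  have "alg_eq R b (Mul (Scal 1) b)" by (rule ae_sym, rule alg_eq.mul_one_left)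
  also have "alg_eq R \<dots> (Mul (Scal (inverse s * s)) b)" using assms(2) by (simp add: alg_eq.refl)
  also have "alg_eq R \<dots> (Mul (Scal (inverse s)) (Mul (Scal s) b))" by (rule ae_sym, rule ae_scal_mul_scal)
  also have "alg_eq R \<dots> (Mul (Scal (inverse s)) a)" by (rule ae_mulR, rule ae_sym, rule assms(1))
  finally show ?thesis .
qed

lemma ae_scal_smul:
  assumes "alg_eq R a (Mul (Scal s) b)"
  shows "alg_eq R (Mul (Scal t) a) (Mul (Scal (t*s)) b)"
  using ae_trans[OF ae_mulR[OF assms] ae_scal_mul_scal] .

lemma ae_scal_subst: "alg_eq R a (Mul (Scal s) b) \<Longrightarrow> s = t \<Longrightarrow> alg_eq R a (Mul (Scal t) b)"
  by simp

lemma ae_mul1L: "alg_eq R (Mul x y) (Scal 1) \<Longrightarrow> alg_eq R (Mul (Mul x y) a) a"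
  by (meson ae_mulL alg_eq.mul_one_left ae_trans)
lemma ae_mul1R: "alg_eq R (Mul x y) (Scal 1) \<Longrightarrow> alg_eq R (Mul a (Mul x y)) a"
  by (meson ae_mulR alg_eq.mul_one_right ae_trans)


lemma ae_neg_cancel: "alg_eq R (Add (Mul (Scal (-1)) b) b) (Scal 0)"
proof -
  have "alg_eq R (Add (Mul (Scal (-1)) b) b) (Add (Mul (Scal (-1)) b) (Mul (Scal 1) b))"
    by (rule ae_addR, rule ae_sym, rule alg_eq.mul_one_left)
  also have "alg_eq R \<dots> (Mul (Scal (-1 + 1)) b)" by (rule ae_scal_add)
  also have "alg_eq R \<dots> (Scal 0)" by (simp add: alg_eq.mul_zero)
  finally show ?thesis .
qed

lemma ae_from_sum0: assumes "alg_eq R (Add X C) (Scal 0)" shows "alg_eq R C (Mul (Scal (-1)) X)"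
proof -
  have "alg_eq R C (Add (Scal 0) C)" by (rule ae_sym, rule ae_zero_add)
  also have "alg_eq R \<dots> (Add (Add (Mul (Scal (-1)) X) X) C)" by (rule ae_addL, rule ae_sym, rule ae_neg_cancel)
  also have "alg_eq R \<dots> (Add (Mul (Scal (-1)) X) (Add X C))" by (rule alg_eq.add_assoc)
  also have "alg_eq R \<dots> (Add (Mul (Scal (-1)) X) (Scal 0))" by (rule ae_addR, rule assms)
  also have "alg_eq R \<dots> (Mul (Scal (-1)) X)" by (rule alg_eq.add_zero)
  finally show ?thesis .
qed

lemma ae_sub_eq: assumes "alg_eq R (Add a (Mul (Scal (-1)) b)) c" shows "alg_eq R a (Add b c)"
proof -
  have "alg_eq R a (Add a (Scal 0))" by (rule ae_sym, rule alg_eq.add_zero)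
  also have "alg_eq R \<dots> (Add a (Add (Mul (Scal (-1)) b) b))" by (rule ae_addR, rule ae_sym, rule ae_neg_cancel)
  also have "alg_eq R \<dots> (Add (Add a (Mul (Scal (-1)) b)) b)" by (rule ae_add_assoc')
  also have "alg_eq R \<dots> (Add c b)" by (rule ae_addL, rule assms)
  also have "alg_eq R \<dots> (Add b c)" by (rule alg_eq.add_comm)
  finally show ?thesis .
qed

lemma ae_neg_add: "alg_eq R (Mul (Scal s) (Add a b)) (Add (Mul (Scal s) a) (Mul (Scal s) b))"
  by (rule alg_eq.distrib_left)

lemma ae_neg_neg: "alg_eq R (Mul (Scal (-1)) (Mul (Scal (-1)) b)) b"
proof -
  have "alg_eq R (Mul (Scal (-1)) (Mul (Scal (-1)) b)) (Mul (Scal ((-1)*(-1))) b)" by (rule ae_scal_mul_scal)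
  then show ?thesis by (simp add: ae_trans alg_eq.mul_one_left)
qed

lemma ae_G_C: assumes "alg_eq R (Add (Add A (Mul (Scal (-1)) (Mul (Scal t) B))) C) (Scal 0)"
  shows "alg_eq R C (Add (Mul (Scal t) B) (Mul (Scal (-1)) A))"
proof -
  have "alg_eq R C (Mul (Scal (-1)) (Add A (Mul (Scal (-1)) (Mul (Scal t) B))))" by (rule ae_from_sum0, rule assms)
  also have "alg_eq R \<dots> (Add (Mul (Scal (-1)) A) (Mul (Scal (-1)) (Mul (Scal (-1)) (Mul (Scal t) B))))"
    by (rule ae_neg_add)
  also have "alg_eq R \<dots> (Add (Mul (Scal (-1)) A) (Mul (Scal t) B))" by (rule ae_addR, rule ae_neg_neg)
  also have "alg_eq R \<dots> (Add (Mul (Scal t) B) (Mul (Scal (-1)) A))" by (rule alg_eq.add_comm)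
  finally show ?thesis .
qed

lemma ae_G_A: assumes "alg_eq R (Add (Add A (Mul (Scal (-1)) (Mul (Scal t) B))) C) (Scal 0)"
  shows "alg_eq R A (Add (Mul (Scal t) B) (Mul (Scal (-1)) C))"
proof -
  let ?D = "Mul (Scal (-1)) (Mul (Scal t) B)"
  have "alg_eq R (Add (Add C ?D) A) (Add C (Add ?D A))" by (rule alg_eq.add_assoc)
  also have "alg_eq R \<dots> (Add C (Add A ?D))" by (rule ae_addR, rule alg_eq.add_comm)
  also have "alg_eq R \<dots> (Add (Add A ?D) C)" by (rule alg_eq.add_comm)
  also have "alg_eq R \<dots> (Scal 0)" by (rule assms)
  finally show ?thesis by (rule ae_G_C)
qed

lemma ae_solve: assumes "alg_eq R (Add X C) Z" shows "alg_eq R C (Add (Mul (Scal (-1)) X) Z)"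
proof -
  have "alg_eq R C (Add (Scal 0) C)" by (rule ae_sym, rule ae_zero_add)
  also have "alg_eq R \<dots> (Add (Add (Mul (Scal (-1)) X) X) C)" by (rule ae_addL, rule ae_sym, rule ae_neg_cancel)
  also have "alg_eq R \<dots> (Add (Mul (Scal (-1)) X) (Add X C))" by (rule alg_eq.add_assoc)
  also have "alg_eq R \<dots> (Add (Mul (Scal (-1)) X) Z)" by (rule ae_addR, rule assms)
  finally show ?thesis .
qed

lemma ae_S_C: assumes "alg_eq R (Add (Add A C) (Mul (Scal (- t)) B)) Y"
  shows "alg_eq R C (Add (Add (Mul (Scal (-1)) A) (Mul (Scal t) B)) Y)"
proof -
  let ?D = "Mul (Scal (- t)) B"
  have "alg_eq R (Add (Add A ?D) C) (Add A (Add ?D C))" by (rule alg_eq.add_assoc)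
  also have "alg_eq R \<dots> (Add A (Add C ?D))" by (rule ae_addR, rule alg_eq.add_comm)
  also have "alg_eq R \<dots> (Add (Add A C) ?D)" by (rule ae_add_assoc')
  also have "alg_eq R \<dots> Y" by (rule assms)
  finally have "alg_eq R C (Add (Mul (Scal (-1)) (Add A ?D)) Y)" by (rule ae_solve)
  also have "alg_eq R \<dots> (Add (Add (Mul (Scal (-1)) A) (Mul (Scal (-1)) ?D)) Y)"
    by (rule ae_addL, rule alg_eq.distrib_left)
  also have "alg_eq R \<dots> (Add (Add (Mul (Scal (-1)) A) (Mul (Scal t) B)) Y)"
    by (rule ae_addL, rule ae_addR, rule ae_trans[OF ae_scal_mul_scal], simp add: alg_eq.refl)
  finally show ?thesis .
qed

lemma ae_S_A: assumes "alg_eq R (Add (Add A C) (Mul (Scal (- t)) B)) Y"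
  shows "alg_eq R A (Add (Add (Mul (Scal (-1)) C) (Mul (Scal t) B)) Y)"
proof -
  have "alg_eq R (Add (Add C A) (Mul (Scal (- t)) B)) Y"
    by (rule ae_trans[OF ae_addL[OF alg_eq.add_comm] assms])
  then show ?thesis by (rule ae_S_C)
qed

context
  fixes n :: nat and q :: complex
begin

lemma sl_KL: "rg n a \<Longrightarrow> alg_eq (sl_rels n q) (Mul (Gen (K a)) (Gen (Kinv a))) (Scal 1)"
  by (rule alg_eq.rel) (auto simp: sl_rels_def)
lemma sl_LK: "rg n a \<Longrightarrow> alg_eq (sl_rels n q) (Mul (Gen (Kinv a)) (Gen (K a))) (Scal 1)"
  by (rule alg_eq.rel) (auto simp: sl_rels_def)
lemma sl_KK: "rg n a \<Longrightarrow> rg n b \<Longrightarrow> alg_eq (sl_rels n q) (Mul (Gen (K a)) (Gen (K b))) (Mul (Gen (K b)) (Gen (K a)))"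
  by (rule alg_eq.rel) (auto simp: sl_rels_def)
lemma sl_KEL: "rg n a \<Longrightarrow> rg n b \<Longrightarrow> alg_eq (sl_rels n q) (Mul (Mul (Gen (K a)) (Gen (E b))) (Gen (Kinv a))) (Mul (Scal (q powi cartan a b)) (Gen (E b)))"
  by (rule alg_eq.rel) (auto simp: sl_rels_def Sm_def)
lemma sl_KFL: "rg n a \<Longrightarrow> rg n b \<Longrightarrow> alg_eq (sl_rels n q) (Mul (Mul (Gen (K a)) (Gen (F b))) (Gen (Kinv a))) (Mul (Scal (q powi (- cartan a b))) (Gen (F b)))"
  by (rule alg_eq.rel) (auto simp: sl_rels_def Sm_def)


lemma sl_LK': assumes "rg n a" "rg n b"
  shows "alg_eq (sl_rels n q) (Mul (Gen (Kinv a)) (Gen (K b))) (Mul (Gen (K b)) (Gen (Kinv a)))"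
proof -
  let ?K = "\<lambda>x. Gen (K x)" let ?L = "\<lambda>x. Gen (Kinv x)"
  have "alg_eq (sl_rels n q) (Mul (?L a) (?K b)) (Mul (Mul (?L a) (?K b)) (Mul (?K a) (?L a)))"
    by (rule ae_sym, rule ae_mul1R, rule sl_KL, rule assms)
  also have "alg_eq (sl_rels n q) \<dots> (Mul (?L a) (Mul (Mul (?K b) (?K a)) (?L a)))" by (rule ae_RA)
  also have "alg_eq (sl_rels n q) \<dots> (Mul (?L a) (Mul (Mul (?K a) (?K b)) (?L a)))"
    by (rule ae_mulR, rule ae_mulL, rule sl_KK, rule assms(2), rule assms(1))
  also have "alg_eq (sl_rels n q) \<dots> (Mul (Mul (?L a) (?K a)) (Mul (?K b) (?L a)))" by (rule ae_sym, rule ae_RA)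
  also have "alg_eq (sl_rels n q) \<dots> (Mul (?K b) (?L a))" by (rule ae_mul1L, rule sl_LK, rule assms)
  finally show ?thesis .
qed

lemma sl_LL: assumes "rg n a" "rg n b"
  shows "alg_eq (sl_rels n q) (Mul (Gen (Kinv a)) (Gen (Kinv b))) (Mul (Gen (Kinv b)) (Gen (Kinv a)))"
proof -
  let ?K = "\<lambda>x. Gen (K x)" let ?L = "\<lambda>x. Gen (Kinv x)"
  have "alg_eq (sl_rels n q) (Mul (?L a) (?L b)) (Mul (Mul (?L b) (?K b)) (Mul (?L a) (?L b)))"
    by (rule ae_sym, rule ae_mul1L, rule sl_LK, rule assms)
  also have "alg_eq (sl_rels n q) \<dots> (Mul (?L b) (Mul (Mul (?K b) (?L a)) (?L b)))" by (rule ae_RA)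
  also have "alg_eq (sl_rels n q) \<dots> (Mul (?L b) (Mul (Mul (?L a) (?K b)) (?L b)))"
    by (rule ae_mulR, rule ae_mulL, rule ae_sym, rule sl_LK', rule assms(1), rule assms(2))
  also have "alg_eq (sl_rels n q) \<dots> (Mul (?L b) (Mul (?L a) (Mul (?K b) (?L b))))"
    by (rule ae_mulR, rule alg_eq.mul_assoc)
  also have "alg_eq (sl_rels n q) \<dots> (Mul (?L b) (?L a))"
    by (rule ae_mulR, rule ae_mul1R, rule sl_KL, rule assms)
  finally show ?thesis .
qed

lemma ae_conj_right:
  assumes r: "alg_eq R (Mul (Mul x y) z) (Mul (Scal s) w)" and zx: "alg_eq R (Mul z x) (Scal 1)"
  shows "alg_eq R (Mul x y) (Mul (Scal s) (Mul w x))"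
proof -
  have "alg_eq R (Mul x y) (Mul (Mul x y) (Mul z x))" by (rule ae_sym, rule ae_mul1R, rule zx)
  also have "alg_eq R \<dots> (Mul (Mul (Mul x y) z) x)" by (rule ae_sym, rule alg_eq.mul_assoc)
  also have "alg_eq R \<dots> (Mul (Mul (Scal s) w) x)" by (rule ae_mulL, rule r)
  also have "alg_eq R \<dots> (Mul (Scal s) (Mul w x))" by (rule alg_eq.mul_assoc)
  finally show ?thesis .
qed

lemma ae_conj_left:
  assumes r: "alg_eq R (Mul (Mul x y) z) (Mul (Scal s) y)" and zx: "alg_eq R (Mul z x) (Scal 1)"
  shows "alg_eq R (Mul y z) (Mul (Scal s) (Mul z y))"
proof -
  have "alg_eq R (Mul y z) (Mul (Mul z x) (Mul y z))" by (rule ae_sym, rule ae_mul1L, rule zx)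
  also have "alg_eq R \<dots> (Mul z (Mul (Mul x y) z))" by (rule ae_RA)
  also have "alg_eq R \<dots> (Mul z (Mul (Scal s) y))" by (rule ae_mulR, rule r)
  also have "alg_eq R \<dots> (Mul (Scal s) (Mul z y))" by (rule ae_scal_left_in)
  finally show ?thesis .
qed

lemma qpow_ne0: "q \<noteq> 0 \<Longrightarrow> q powi e \<noteq> 0" by simp

lemma sl_KF: assumes "rg n a" "rg n b" "s = q powi (- cartan a b)"
  shows "alg_eq (sl_rels n q) (Mul (Gen (K a)) (Gen (F b))) (Mul (Scal s) (Mul (Gen (F b)) (Gen (K a))))"
  unfolding assms(3) by (rule ae_conj_right[OF sl_KFL sl_LK]) (use assms in auto)

lemma sl_KE: assumes "rg n a" "rg n b"
  shows "alg_eq (sl_rels n q) (Mul (Gen (K a)) (Gen (E b))) (Mul (Scal (q powi cartan a b)) (Mul (Gen (E b)) (Gen (K a))))"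
  by (rule ae_conj_right[OF sl_KEL sl_LK]) (use assms in auto)

lemma sl_EK: assumes "rg n a" "rg n b" "q \<noteq> 0" "s = q powi (- cartan a b)"
  shows "alg_eq (sl_rels n q) (Mul (Gen (E b)) (Gen (K a))) (Mul (Scal s) (Mul (Gen (K a)) (Gen (E b))))"
  using ae_scal_cancel[OF sl_KE[OF assms(1,2)]] assms(3,4) by (simp add: power_int_minus)

lemma sl_FL: assumes "rg n a" "rg n b"
  shows "alg_eq (sl_rels n q) (Mul (Gen (F b)) (Gen (Kinv a))) (Mul (Scal (q powi (- cartan a b))) (Mul (Gen (Kinv a)) (Gen (F b))))"
  by (rule ae_conj_left[OF sl_KFL sl_LK]) (use assms in auto)

lemma sl_LF: assumes "rg n a" "rg n b" "q \<noteq> 0" "s = q powi (cartan a b)"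
  shows "alg_eq (sl_rels n q) (Mul (Gen (Kinv a)) (Gen (F b))) (Mul (Scal s) (Mul (Gen (F b)) (Gen (Kinv a))))"
  using ae_scal_cancel[OF sl_FL[OF assms(1,2)]] assms(3,4) by (simp add: power_int_minus)

lemma sl_EL: assumes "rg n a" "rg n b" "s = q powi (cartan a b)"
  shows "alg_eq (sl_rels n q) (Mul (Gen (E b)) (Gen (Kinv a))) (Mul (Scal s) (Mul (Gen (Kinv a)) (Gen (E b))))"
  unfolding assms(3) by (rule ae_conj_left[OF sl_KEL sl_LK]) (use assms in auto)

lemma sl_EF: assumes "rg n a" "rg n b"
  shows "alg_eq (sl_rels n q) (Mul (Gen (E a)) (Gen (F b))) (Add (Mul (Gen (F b)) (Gen (E a)))
     (Mul (Scal (if a = b then 1 / (q - inverse q) else 0)) (Add (Gen (K a)) (Mul (Scal (-1)) (Gen (Kinv a))))))"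
proof -
  have r: "alg_eq (sl_rels n q) (Add (Mul (Gen (E a)) (Gen (F b))) (Mul (Scal (-1)) (Mul (Gen (F b)) (Gen (E a)))))
     (Mul (Scal (if a = b then 1 / (q - inverse q) else 0)) (Add (Gen (K a)) (Mul (Scal (-1)) (Gen (Kinv a)))))"
    by (rule alg_eq.rel) (use assms in \<open>auto simp: sl_rels_def Sm_def Sub_def\<close>)
  show ?thesis by (rule ae_sub_eq[OF r])
qed
end


definition "c_one = ((0::nat), [(0::int,1::int)])"
definition "c_zero = ((0::nat), ([]::lp))"
definition "c_qp e = ((0::nat), [(e::int, 1::int)])"
definition "c_m1 = ((0::nat), [(0::int, -1::int)])"
definition "c_two = ((0::nat), [(-1::int, 1::int), (1, 1)])"
definition "c_mtwo = ((0::nat), [(-1::int, -1::int), (1, -1)])"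
definition "c_qd = ((1::nat), [(1::int, 1::int)])"
definition "c_qi = ((0::nat), [(-1::int, 1::int)])"

context qgood begin
lemma cf_simps:
  "cf_ev q c_one = 1" "cf_ev q c_zero = 0" "cf_ev q (c_qp e) = q powi e" "cf_ev q c_m1 = -1"
  "cf_ev q c_two = q + inverse q" "cf_ev q c_mtwo = - (q + inverse q)" "cf_ev q c_qi = inverse q"
  "cf_ev q c_qd = 1 / (q - inverse q)"
proof -
  show "cf_ev q c_qd = 1 / (q - inverse q)"
    using q0 d0 by (simp add: c_qd_def field_simps power2_eq_square)
qed (simp_all add: c_one_def c_zero_def c_qp_def c_m1_def c_two_def c_mtwo_def c_qi_def power_int_minus)
end

definition cA :: "int \<Rightarrow> nat \<Rightarrow> nat \<Rightarrow> int" where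
  "cA c a b = (if a = b then 2 else c)"

fun wdc :: "(nat \<Rightarrow> 'y fa) \<Rightarrow> nat list \<Rightarrow> 'y fa" where
  "wdc h [] = Scal 1"
| "wdc h [x] = h x"
| "wdc h (x#y#zs) = Mul (h x) (wdc h (y#zs))"

lemma wd_wdc: "alg_eq R (wd h l) (wdc h l)"
proof (induction h l rule: wdc.induct)
  case (1 h) then show ?case by (simp add: alg_eq.refl)
next
  case (2 h x) then show ?case by (simp add: alg_eq.mul_one_right)
next
  case (3 h x y zs) then show ?case by (simp add: ae_mulR)
qed

definition valid :: "('y fa \<times> 'y fa) set \<Rightarrow> complex \<Rightarrow> (nat \<Rightarrow> 'y fa) \<Rightarrow> (nat list \<times> ct) list \<Rightarrow> bool" where
  "valid R q h rs \<longleftrightarrow> (\<forall>(l,r)\<in>set rs. alg_eq R (wdc h l) (ct_ev q h r))"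

lemma valid_append[simp]: "valid R q h (xs @ ys) \<longleftrightarrow> valid R q h xs \<and> valid R q h ys"
  by (auto simp: valid_def)

definition mk_rules :: "(nat list \<times> ct) list \<Rightarrow> (nat list \<times> np) list" where
  "mk_rules rs = map (\<lambda>(l,r). (l, np_of_ct r)) rs"

lemma (in qgood) valid_mk: "valid R q h rs \<Longrightarrow> rules_ok R q h (mk_rules rs)"
  unfolding valid_def rules_ok_def mk_rules_def
  by (auto intro!: ae_trans[OF wd_wdc] ae_trans[OF _ ae_sym[OF np_of_ct_sound]])

definition fam_inv :: "(nat list \<times> ct) list" where
  "fam_inv = [([2,4], CS c_one), ([4,2], CS c_one), ([3,5], CS c_one), ([5,3], CS c_one),
     ([3,2], CM (CG 2) (CG 3)), ([5,4], CM (CG 4) (CG 5)), ([3,4], CM (CG 4) (CG 3)), ([5,2], CM (CG 2) (CG 5))]"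

definition fam_KF :: "int \<Rightarrow> (nat list \<times> ct) list" where
  "fam_KF c = concat (map (\<lambda>(a,b). [([2+a, b], CM (CS (c_qp (- cA c a b))) (CM (CG b) (CG (2+a)))),
        ([4+a,b], CM (CS (c_qp (cA c a b))) (CM (CG b) (CG (4+a)))),
        ([6+b,2+a], CM (CS (c_qp (- cA c a b))) (CM (CG (2+a)) (CG (6+b)))),
        ([6+b,4+a], CM (CS (c_qp (cA c a b))) (CM (CG (4+a)) (CG (6+b))))])
        [(0,0),(0,1),(1,0),(1,1)])"

definition fam_EF :: "(nat list \<times> ct) list" where
  "fam_EF = map (\<lambda>(a,b). ([6+a,b], CA (CM (CG b) (CG (6+a)))
      (CM (CS (if a = b then c_qd else c_zero)) (CA (CG (2+a)) (CM (CS c_m1) (CG (4+a)))))))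
      [(0,0),(0,1),(1,0),(1,1)]"

definition fam_XC :: "(nat list \<times> ct) list" where
  "fam_XC = concat (map (\<lambda>x. map (\<lambda>y. ([8+x,y], CM (CG y) (CG (8+x)))) [0,1,2,3,4,5,6,7]) [0,1])"

definition serre_ct :: "nat \<Rightarrow> (nat list \<times> ct) list" where
  "serre_ct g = [([g+1,g,g], CA (CM (CS c_two) (CM (CM (CG g) (CG (g+1))) (CG g))) (CM (CS c_m1) (CM (CM (CG g) (CG g)) (CG (g+1))))),
     ([g+1,g+1,g], CA (CM (CS c_two) (CM (CM (CG (g+1)) (CG g)) (CG (g+1)))) (CM (CS c_m1) (CM (CM (CG g) (CG (g+1))) (CG (g+1)))))]"

definition fam_Xadj :: "(nat list \<times> ct) list" where
  "fam_Xadj = [([9,8,8], CA (CA (CM (CS c_m1) (CM (CM (CG 8) (CG 8)) (CG 9))) (CM (CS c_two) (CM (CM (CG 8) (CG 9)) (CG 8)))) (CM (CS c_m1) (CG 9))),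
     ([9,9,8], CA (CA (CM (CS c_m1) (CM (CM (CG 8) (CG 9)) (CG 9))) (CM (CS c_two) (CM (CM (CG 9) (CG 8)) (CG 9)))) (CM (CS c_m1) (CG 8)))]"

definition fam_far :: "(nat list \<times> ct) list" where
  "fam_far = [([1,0], CM (CG 0) (CG 1)), ([7,6], CM (CG 6) (CG 7)), ([9,8], CM (CG 8) (CG 9))]"

definition "rules_adj = mk_rules (fam_inv @ fam_KF (-1) @ fam_EF @ fam_XC @ serre_ct 0 @ serre_ct 6 @ fam_Xadj)"
definition "rules_far = mk_rules (fam_inv @ fam_KF 0 @ fam_EF @ fam_XC @ fam_far)"

definition Phi_ct :: "nat \<Rightarrow> ct" where
  "Phi_ct a = CA (CA (CG a) (CM (CS c_m1) (CM (CS c_qi) (CM (CG (2+a)) (CG (6+a))))))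
                 (CM (CG (2+a)) (CG (8+a)))"

definition cubic_ct :: "ct \<Rightarrow> ct \<Rightarrow> ct" where
  "cubic_ct x y = CA (CA (CA (CM (CM x x) y) (CM (CM y x) x)) (CM (CS c_mtwo) (CM (CM x y) x))) y"

definition comm_ct :: "ct \<Rightarrow> ct \<Rightarrow> ct" where
  "comm_ct x y = CA (CM x y) (CM (CS c_m1) (CM y x))"


lemma comp_adj: "red rules_adj 20 (np_of_ct (cubic_ct (Phi_ct 0) (Phi_ct 1))) = []"
  by code_simp

lemma comp_far: "red rules_far 20 (np_of_ct (comm_ct (Phi_ct 0) (Phi_ct 1))) = []"
  by code_simp


lemma liftL: assumes "alg_eq RA a b" shows "alg_eq (tensor_rels RA RB) (map_fa Inl a) (map_fa Inl b)"
  unfolding map_fa_subst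
proof (rule subst_hom[OF _ assms])
  fix l r assume "(l, r) \<in> RA"
  then have "(map_fa Inl l, map_fa Inl r) \<in> tensor_rels RA RB" by (force simp: tensor_rels_def)
  then show "alg_eq (tensor_rels RA RB) (subst (\<lambda>x. Gen (Inl x)) l) (subst (\<lambda>x. Gen (Inl x)) r)"
    by (simp add: map_fa_subst alg_eq.rel)
qed

lemma liftR: assumes "alg_eq RB a b" shows "alg_eq (tensor_rels RA RB) (map_fa Inr a) (map_fa Inr b)"
  unfolding map_fa_subst
proof (rule subst_hom[OF _ assms])
  fix l r assume "(l, r) \<in> RB"
  then have "(map_fa Inr l, map_fa Inr r) \<in> tensor_rels RA RB" by (force simp: tensor_rels_def)
  then show "alg_eq (tensor_rels RA RB) (subst (\<lambda>x. Gen (Inr x)) l) (subst (\<lambda>x. Gen (Inr x)) r)"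
    by (simp add: map_fa_subst alg_eq.rel)
qed

lemma T_XC: "alg_eq (tensor_rels RA RB) (Mul (Gen (Inr y)) (Gen (Inl x))) (Mul (Gen (Inl x)) (Gen (Inr y)))"
  by (rule ae_sym, rule alg_eq.rel) (auto simp: tensor_rels_def)

abbreviation "adj i j \<equiv> (j = i + 1 \<or> i = j + 1)"

context fixes n :: nat and q :: complex
begin

lemma sl_serre: assumes "rg n i" "rg n j" "adj i j" "g = E \<or> g = F"
  shows "alg_eq (sl_rels n q) (Add (Add (Mul (Mul (Gen (g i)) (Gen (g i))) (Gen (g j)))
     (Mul (Scal (-1)) (Mul (Scal (q + inverse q)) (Mul (Mul (Gen (g i)) (Gen (g j))) (Gen (g i))))))
     (Mul (Mul (Gen (g j)) (Gen (g i))) (Gen (g i)))) (Scal 0)"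
  by (rule alg_eq.rel) (use assms in \<open>auto simp: sl_rels_def Sub_def Sm_def\<close>)

lemma T_serre_C: assumes "rg n i" "rg n j" "adj i j" "g = E \<or> g = F" "t = q + inverse q" "m = -1"
  shows "alg_eq (tensor_rels (sl_rels n q) RB) (Mul (Gen (Inl (g j))) (Mul (Gen (Inl (g i))) (Gen (Inl (g i)))))
     (Add (Mul (Scal t) (Mul (Mul (Gen (Inl (g i))) (Gen (Inl (g j)))) (Gen (Inl (g i)))))
          (Mul (Scal m) (Mul (Mul (Gen (Inl (g i))) (Gen (Inl (g i)))) (Gen (Inl (g j))))))"
proof -
  have h: "alg_eq (tensor_rels (sl_rels n q) RB) (Mul (Mul (Gen (Inl (g j))) (Gen (Inl (g i)))) (Gen (Inl (g i))))
     (Add (Mul (Scal t) (Mul (Mul (Gen (Inl (g i))) (Gen (Inl (g j)))) (Gen (Inl (g i)))))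
          (Mul (Scal m) (Mul (Mul (Gen (Inl (g i))) (Gen (Inl (g i)))) (Gen (Inl (g j))))))"
    using liftL[OF ae_G_C[OF sl_serre[OF assms(1-4)]], of RB] assms(5,6) by simp
  show ?thesis by (rule ae_trans[OF ae_sym[OF alg_eq.mul_assoc] h])
qed

lemma T_serre_A: assumes "rg n i" "rg n j" "adj i j" "g = E \<or> g = F" "t = q + inverse q" "m = -1"
  shows "alg_eq (tensor_rels (sl_rels n q) RB) (Mul (Gen (Inl (g i))) (Mul (Gen (Inl (g i))) (Gen (Inl (g j)))))
     (Add (Mul (Scal t) (Mul (Mul (Gen (Inl (g i))) (Gen (Inl (g j)))) (Gen (Inl (g i)))))
          (Mul (Scal m) (Mul (Mul (Gen (Inl (g j))) (Gen (Inl (g i)))) (Gen (Inl (g i))))))"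
proof -
  have h: "alg_eq (tensor_rels (sl_rels n q) RB) (Mul (Mul (Gen (Inl (g i))) (Gen (Inl (g i)))) (Gen (Inl (g j))))
     (Add (Mul (Scal t) (Mul (Mul (Gen (Inl (g i))) (Gen (Inl (g j)))) (Gen (Inl (g i)))))
          (Mul (Scal m) (Mul (Mul (Gen (Inl (g j))) (Gen (Inl (g i)))) (Gen (Inl (g i))))))"
    using liftL[OF ae_G_A[OF sl_serre[OF assms(1-4)]], of RB] assms(5,6) by simp
  show ?thesis by (rule ae_trans[OF ae_sym[OF alg_eq.mul_assoc] h])
qed

lemma so_cubic: assumes "rg n i" "rg n j" "adj i j"
  shows "alg_eq (so_rels n q) (Add (Add (Mul (Mul (Gen (I i)) (Gen (I i))) (Gen (I j))) (Mul (Mul (Gen (I j)) (Gen (I i))) (Gen (I i))))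
      (Mul (Scal (- (q + inverse q))) (Mul (Mul (Gen (I i)) (Gen (I j))) (Gen (I i))))) (Mul (Scal (-1)) (Gen (I j)))"
proof (rule alg_eq.rel)
  show "(Add (Add (Mul (Mul (Gen (I i)) (Gen (I i))) (Gen (I j))) (Mul (Mul (Gen (I j)) (Gen (I i))) (Gen (I i))))
      (Mul (Scal (- (q + inverse q))) (Mul (Mul (Gen (I i)) (Gen (I j))) (Gen (I i)))), Mul (Scal (-1)) (Gen (I j))) \<in> so_rels n q"
  proof (cases "j = i + 1")
    case True then show ?thesis using assms unfolding so_rels_def Sm_def by blast
  next
    case False then have "i = j + 1" using assms by simp
    then show ?thesis using assms unfolding so_rels_def Sm_def by blast
  qed
qed

lemma T_X_C: assumes "rg n i" "rg n j" "adj i j" "t = q + inverse q" "m = -1"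
  shows "alg_eq (tensor_rels RA (so_rels n q)) (Mul (Gen (Inr (I j))) (Mul (Gen (Inr (I i))) (Gen (Inr (I i)))))
     (Add (Add (Mul (Scal m) (Mul (Mul (Gen (Inr (I i))) (Gen (Inr (I i)))) (Gen (Inr (I j)))))
               (Mul (Scal t) (Mul (Mul (Gen (Inr (I i))) (Gen (Inr (I j)))) (Gen (Inr (I i))))))
          (Mul (Scal m) (Gen (Inr (I j)))))"
proof -
  have h: "alg_eq (tensor_rels RA (so_rels n q)) (Mul (Mul (Gen (Inr (I j))) (Gen (Inr (I i)))) (Gen (Inr (I i))))
     (Add (Add (Mul (Scal m) (Mul (Mul (Gen (Inr (I i))) (Gen (Inr (I i)))) (Gen (Inr (I j)))))
               (Mul (Scal t) (Mul (Mul (Gen (Inr (I i))) (Gen (Inr (I j)))) (Gen (Inr (I i))))))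
          (Mul (Scal m) (Gen (Inr (I j)))))"
    using liftR[OF ae_S_C[OF so_cubic[OF assms(1-3)]], of RA] assms(4,5) by simp
  show ?thesis by (rule ae_trans[OF ae_sym[OF alg_eq.mul_assoc] h])
qed

lemma T_X_A: assumes "rg n i" "rg n j" "adj i j" "t = q + inverse q" "m = -1"
  shows "alg_eq (tensor_rels RA (so_rels n q)) (Mul (Gen (Inr (I i))) (Mul (Gen (Inr (I i))) (Gen (Inr (I j)))))
     (Add (Add (Mul (Scal m) (Mul (Mul (Gen (Inr (I j))) (Gen (Inr (I i)))) (Gen (Inr (I i)))))
               (Mul (Scal t) (Mul (Mul (Gen (Inr (I i))) (Gen (Inr (I j)))) (Gen (Inr (I i))))))
          (Mul (Scal m) (Gen (Inr (I j)))))"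
proof -
  have h: "alg_eq (tensor_rels RA (so_rels n q)) (Mul (Mul (Gen (Inr (I i))) (Gen (Inr (I i)))) (Gen (Inr (I j))))
     (Add (Add (Mul (Scal m) (Mul (Mul (Gen (Inr (I j))) (Gen (Inr (I i)))) (Gen (Inr (I i)))))
               (Mul (Scal t) (Mul (Mul (Gen (Inr (I i))) (Gen (Inr (I j)))) (Gen (Inr (I i))))))
          (Mul (Scal m) (Gen (Inr (I j)))))"
    using liftR[OF ae_S_A[OF so_cubic[OF assms(1-3)]], of RA] assms(4,5) by simp
  show ?thesis by (rule ae_trans[OF ae_sym[OF alg_eq.mul_assoc] h])
qed

end


definition hT :: "nat \<Rightarrow> nat \<Rightarrow> nat \<Rightarrow> (slgen + sogen) fa" where
  "hT i1 i2 v = (if v = 0 then Gen (Inl (F i1)) else if v = 1 then Gen (Inl (F i2))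
     else if v = 2 then Gen (Inl (K i1)) else if v = 3 then Gen (Inl (K i2))
     else if v = 4 then Gen (Inl (Kinv i1)) else if v = 5 then Gen (Inl (Kinv i2))
     else if v = 6 then Gen (Inl (E i1)) else if v = 7 then Gen (Inl (E i2))
     else if v = 8 then Gen (Inr (I i1)) else Gen (Inr (I i2)))"

context fixes n :: nat and q :: complex
begin

lemma T_KL: "rg n a \<Longrightarrow> s = 1 \<Longrightarrow> alg_eq (tensor_rels (sl_rels n q) RB) (Mul (Gen (Inl (K a))) (Gen (Inl (Kinv a)))) (Scal s)"
  using liftL[OF sl_KL[where n=n and a=a and q=q], of RB] by simp
lemma T_LK: "rg n a \<Longrightarrow> s = 1 \<Longrightarrow> alg_eq (tensor_rels (sl_rels n q) RB) (Mul (Gen (Inl (Kinv a))) (Gen (Inl (K a)))) (Scal s)"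
  using liftL[OF sl_LK[where n=n and a=a and q=q], of RB] by simp
lemma T_KK: "rg n a \<Longrightarrow> rg n b \<Longrightarrow> alg_eq (tensor_rels (sl_rels n q) RB) (Mul (Gen (Inl (K a))) (Gen (Inl (K b)))) (Mul (Gen (Inl (K b))) (Gen (Inl (K a))))"
  using liftL[OF sl_KK[where n=n and a=a and b=b and q=q], of RB] by simp
lemma T_LL: "rg n a \<Longrightarrow> rg n b \<Longrightarrow> alg_eq (tensor_rels (sl_rels n q) RB) (Mul (Gen (Inl (Kinv a))) (Gen (Inl (Kinv b)))) (Mul (Gen (Inl (Kinv b))) (Gen (Inl (Kinv a))))"
  using liftL[OF sl_LL[where n=n and a=a and b=b and q=q], of RB] by simp
lemma T_LKc: "rg n a \<Longrightarrow> rg n b \<Longrightarrow> alg_eq (tensor_rels (sl_rels n q) RB) (Mul (Gen (Inl (Kinv a))) (Gen (Inl (K b)))) (Mul (Gen (Inl (K b))) (Gen (Inl (Kinv a))))"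
  using liftL[OF sl_LK'[where n=n and a=a and b=b and q=q], of RB] by simp
lemma T_KLc: "rg n a \<Longrightarrow> rg n b \<Longrightarrow> alg_eq (tensor_rels (sl_rels n q) RB) (Mul (Gen (Inl (K b))) (Gen (Inl (Kinv a)))) (Mul (Gen (Inl (Kinv a))) (Gen (Inl (K b))))"
  using liftL[OF ae_sym[OF sl_LK'[where n=n and a=a and b=b and q=q]], of RB] by simp
lemma T_KF: "rg n a \<Longrightarrow> rg n b \<Longrightarrow> s = q powi (- cartan a b) \<Longrightarrow>
   alg_eq (tensor_rels (sl_rels n q) RB) (Mul (Gen (Inl (K a))) (Gen (Inl (F b)))) (Mul (Scal s) (Mul (Gen (Inl (F b))) (Gen (Inl (K a)))))"
  using liftL[OF sl_KF[where n=n and a=a and b=b and s=s and q=q], of RB] by simp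
lemma T_LF: "rg n a \<Longrightarrow> rg n b \<Longrightarrow> q \<noteq> 0 \<Longrightarrow> s = q powi (cartan a b) \<Longrightarrow>
   alg_eq (tensor_rels (sl_rels n q) RB) (Mul (Gen (Inl (Kinv a))) (Gen (Inl (F b)))) (Mul (Scal s) (Mul (Gen (Inl (F b))) (Gen (Inl (Kinv a)))))"
  using liftL[OF sl_LF[where n=n and a=a and b=b and q=q and s=s], of RB] by simp
lemma T_EK: "rg n a \<Longrightarrow> rg n b \<Longrightarrow> q \<noteq> 0 \<Longrightarrow> s = q powi (- cartan a b) \<Longrightarrow>
   alg_eq (tensor_rels (sl_rels n q) RB) (Mul (Gen (Inl (E b))) (Gen (Inl (K a)))) (Mul (Scal s) (Mul (Gen (Inl (K a))) (Gen (Inl (E b)))))"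
  using liftL[OF sl_EK[where n=n and a=a and b=b and q=q and s=s], of RB] by simp
lemma T_EL: "rg n a \<Longrightarrow> rg n b \<Longrightarrow> s = q powi (cartan a b) \<Longrightarrow>
   alg_eq (tensor_rels (sl_rels n q) RB) (Mul (Gen (Inl (E b))) (Gen (Inl (Kinv a)))) (Mul (Scal s) (Mul (Gen (Inl (Kinv a))) (Gen (Inl (E b)))))"
  using liftL[OF sl_EL[where n=n and a=a and b=b and s=s and q=q], of RB] by simp
lemma T_EF: "rg n a \<Longrightarrow> rg n b \<Longrightarrow> d = (if a = b then 1 / (q - inverse q) else 0) \<Longrightarrow> m = -1 \<Longrightarrow>
   alg_eq (tensor_rels (sl_rels n q) RB) (Mul (Gen (Inl (E a))) (Gen (Inl (F b))))
     (Add (Mul (Gen (Inl (F b))) (Gen (Inl (E a)))) (Mul (Scal d) (Add (Gen (Inl (K a))) (Mul (Scal m) (Gen (Inl (Kinv a)))))))"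
  using liftL[OF sl_EF[where n=n and a=a and b=b and q=q], of RB] by simp

lemma sl_far: assumes "rg n a" "rg n b" "a + 1 < b \<or> b + 1 < a" "g = E \<or> g = F"
  shows "alg_eq (sl_rels n q) (Mul (Gen (g a)) (Gen (g b))) (Mul (Gen (g b)) (Gen (g a)))"
  by (rule ae_eq_from_diff, rule alg_eq.rel) (use assms in \<open>auto simp: sl_rels_def Sub_def\<close>)

lemma T_farE: "rg n a \<Longrightarrow> rg n b \<Longrightarrow> a + 1 < b \<or> b + 1 < a \<Longrightarrow>
   alg_eq (tensor_rels (sl_rels n q) RB) (Mul (Gen (Inl (E a))) (Gen (Inl (E b)))) (Mul (Gen (Inl (E b))) (Gen (Inl (E a))))"
  using liftL[OF sl_far[of a b E], of RB] by simp
lemma T_farF: "rg n a \<Longrightarrow> rg n b \<Longrightarrow> a + 1 < b \<or> b + 1 < a \<Longrightarrow>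
   alg_eq (tensor_rels (sl_rels n q) RB) (Mul (Gen (Inl (F a))) (Gen (Inl (F b)))) (Mul (Gen (Inl (F b))) (Gen (Inl (F a))))"
  using liftL[OF sl_far[of a b F], of RB] by simp
lemma T_farX: assumes "rg n a" "rg n b" "a + 1 < b \<or> b + 1 < a"
  shows "alg_eq (tensor_rels RA (so_rels n q)) (Mul (Gen (Inr (I a))) (Gen (Inr (I b)))) (Mul (Gen (Inr (I b))) (Gen (Inr (I a))))"
proof -
  have "alg_eq (so_rels n q) (Mul (Gen (I a)) (Gen (I b))) (Mul (Gen (I b)) (Gen (I a)))"
    by (rule alg_eq.rel) (use assms in \<open>auto simp: so_rels_def\<close>)
  from liftR[OF this, of RA] show ?thesis by simp
qed

abbreviation "RT \<equiv> tensor_rels (sl_rels n q) (so_rels n q)"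

lemma cartan_diag[simp]: "cartan a a = 2" by (simp add: cartan_def)

lemma valid_inv: assumes "rg n i1" "rg n i2"
  shows "valid RT q (hT i1 i2) fam_inv"
  unfolding valid_def fam_inv_def
  using assms by (auto simp: hT_def c_one_def intro!: T_KL T_LK T_KK T_LL T_KLc T_LKc)

lemma valid_KF: assumes "rg n i1" "rg n i2" "cartan i1 i2 = c" "cartan i2 i1 = c" "q \<noteq> 0"
  shows "valid RT q (hT i1 i2) (fam_KF c)"
  unfolding valid_def fam_KF_def
  using assms by (auto simp: hT_def c_qp_def cA_def intro!: T_KF T_LF T_EK T_EL)


lemma qd_eq: assumes "q \<noteq> 0" shows "q / (q^2 - 1) = 1 / (q - inverse q)"
proof -
  have "q - inverse q = (q^2 - 1) / q" using assms by (simp add: field_simps power2_eq_square)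
  then show ?thesis by simp
qed

lemma valid_EF: assumes "rg n i1" "rg n i2" "i1 \<noteq> i2" "q \<noteq> 0"
  shows "valid RT q (hT i1 i2) fam_EF"
  unfolding valid_def fam_EF_def
  using assms by (auto simp: hT_def c_qd_def c_zero_def c_m1_def qd_eq intro!: T_EF)

lemma valid_XC: "valid RT q (hT i1 i2) fam_XC"
  unfolding valid_def fam_XC_def
  by (auto simp: hT_def intro!: T_XC)

lemma valid_serre: assumes "rg n i1" "rg n i2" "adj i1 i2"
  shows "valid RT q (hT i1 i2) (serre_ct 0)" "valid RT q (hT i1 i2) (serre_ct 6)"
  unfolding valid_def serre_ct_def
  using assms by (auto simp: hT_def c_two_def c_m1_def
     intro!: T_serre_C[where g=F] T_serre_A[where g=F] T_serre_C[where g=E] T_serre_A[where g=E])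

lemma valid_Xadj: assumes "rg n i1" "rg n i2" "adj i1 i2"
  shows "valid RT q (hT i1 i2) fam_Xadj"
  unfolding valid_def fam_Xadj_def
  using assms by (auto simp: hT_def c_two_def c_m1_def intro!: T_X_C T_X_A)

lemma valid_far: assumes "rg n i1" "rg n i2" "i1 + 1 < i2 \<or> i2 + 1 < i1"
  shows "valid RT q (hT i1 i2) fam_far"
  unfolding valid_def fam_far_def
  using assms by (auto simp: hT_def intro!: T_farE T_farF T_farX)

end


lemma ae_sum0_left: assumes "alg_eq R (Add L Y) (Scal 0)" shows "alg_eq R L (Mul (Scal (-1)) Y)"
  by (rule ae_from_sum0, rule ae_trans[OF alg_eq.add_comm assms])

lemma qgood_of: assumes "q \<noteq> 0" "q \<noteq> 1" "q \<noteq> -1" shows "qgood q"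
proof
  show "q \<noteq> 0" by (rule assms(1))
  show "q^2 \<noteq> 1"
  proof
    assume "q^2 = 1"
    then have "(q - 1) * (q + 1) = 0" by (simp add: algebra_simps power2_eq_square)
    then have "q - 1 = 0 \<or> q + 1 = 0" by simp
    moreover have "q - 1 \<noteq> 0" using assms(2) by simp
    moreover have "q + 1 \<noteq> 0"
    proof
      assume "q + 1 = 0"
      then have "q = -1" by (simp add: eq_neg_iff_add_eq_0)
      with assms(3) show False by simp
    qed
    ultimately show False by blast
  qed
qed

context fixes n :: nat and q :: complex assumes qg: "qgood q"
begin

lemma q0: "q \<noteq> 0" using qg qgood.q0 by blast

lemmas cfs = qgood.cf_simps[OF qg]

lemma Phi_ev: "rg n a \<Longrightarrow> rg n b \<Longrightarrow> ct_ev q (hT a b) (Phi_ct 0) = phi_gen n q (I a)"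
  "rg n a \<Longrightarrow> rg n b \<Longrightarrow> ct_ev q (hT a b) (Phi_ct 1) = phi_gen n q (I b)"
  by (simp_all add: Phi_ct_def hT_def cfs phi_gen_def iota_gen_def Sub_def Sm_def)

lemma ok_adj: assumes "rg n i1" "rg n i2" "adj i1 i2"
  shows "rules_ok (RT n q) q (hT i1 i2) rules_adj"
proof -
  have c: "cartan i1 i2 = -1" "cartan i2 i1 = -1" "i1 \<noteq> i2" using assms by (auto simp: cartan_def)
  have v: "valid (RT n q) q (hT i1 i2) (fam_inv @ fam_KF (-1) @ fam_EF @ fam_XC @ serre_ct 0 @ serre_ct 6 @ fam_Xadj)"
    unfolding valid_append
    using valid_inv[OF assms(1,2)] valid_KF[OF assms(1,2) c(1,2) q0] valid_EF[OF assms(1,2) c(3) q0]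
      valid_XC valid_serre[OF assms] valid_Xadj[OF assms] by blast
  show ?thesis unfolding rules_adj_def by (rule qgood.valid_mk[OF qg v])
qed

lemma ok_far: assumes "rg n i1" "rg n i2" "i1 + 1 < i2 \<or> i2 + 1 < i1"
  shows "rules_ok (RT n q) q (hT i1 i2) rules_far"
proof -
  have c: "cartan i1 i2 = 0" "cartan i2 i1 = 0" "i1 \<noteq> i2" using assms by (auto simp: cartan_def)
  have v: "valid (RT n q) q (hT i1 i2) (fam_inv @ fam_KF 0 @ fam_EF @ fam_XC @ fam_far)"
    unfolding valid_append
    using valid_inv[OF assms(1,2)] valid_KF[OF assms(1,2) c(1,2) q0] valid_EF[OF assms(1,2) c(3) q0]
      valid_XC valid_far[OF assms] by blast
  show ?thesis unfolding rules_far_def by (rule qgood.valid_mk[OF qg v])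
qed

lemma L_cub: assumes "rg n i" "rg n j" "adj i j"
  shows "alg_eq (RT n q) (Add (Add (Mul (Mul (phi_gen n q (I i)) (phi_gen n q (I i))) (phi_gen n q (I j)))
      (Mul (Mul (phi_gen n q (I j)) (phi_gen n q (I i))) (phi_gen n q (I i))))
      (Mul (Scal (- (q + inverse q))) (Mul (Mul (phi_gen n q (I i)) (phi_gen n q (I j))) (phi_gen n q (I i)))))
    (Mul (Scal (-1)) (phi_gen n q (I j)))"
proof -
  have "alg_eq (RT n q) (ct_ev q (hT i j) (cubic_ct (Phi_ct 0) (Phi_ct 1))) (Scal 0)"
    by (rule qgood.engine[OF qg ok_adj[OF assms] comp_adj])
  then show ?thesis
    unfolding cubic_ct_def ct_ev.simps Phi_ev[OF assms(1,2)] cfs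
    by (rule ae_sum0_left)
qed

lemma L_far: assumes "rg n i" "rg n j" "i + 1 < j \<or> j + 1 < i"
  shows "alg_eq (RT n q) (Mul (phi_gen n q (I i)) (phi_gen n q (I j))) (Mul (phi_gen n q (I j)) (phi_gen n q (I i)))"
proof -
  have "alg_eq (RT n q) (ct_ev q (hT i j) (comm_ct (Phi_ct 0) (Phi_ct 1))) (Scal 0)"
    by (rule qgood.engine[OF qg ok_far[OF assms] comp_far])
  then show ?thesis
    unfolding comm_ct_def ct_ev.simps Phi_ev[OF assms(1,2)] cfs
    by (rule ae_eq_from_diff)
qed

end


definition "rules_co = mk_rules [([4,2], CM (CG 2) (CG 4)), ([4,5], CS c_one)]"

definition "cD = CA (CA (CA (CG 0) (CM (CG 1) (CG 3))) (CM (CS c_m1) (CM (CS c_qi) (CM (CM (CG 1) (CG 4)) (CA (CM (CG 2) (CG 5)) (CG 6)))))) (CM (CM (CG 1) (CG 4)) (CG 7))"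
definition "cI = CA (CA (CG 0) (CM (CS c_m1) (CM (CS c_qi) (CM (CG 1) (CG 2))))) (CM (CG 1) (CA (CA (CG 3) (CM (CS c_m1) (CM (CS c_qi) (CM (CG 4) (CG 6))))) (CM (CG 4) (CG 7))))"
definition "ciL = CA (CA (CG 0) (CM (CS c_m1) (CM (CS c_qi) (CM (CG 1) (CG 2))))) (CM (CG 1) (CA (CG 3) (CM (CS c_m1) (CM (CS c_qi) (CM (CG 4) (CG 6))))))"
definition "ciR = CA (CA (CG 0) (CM (CG 1) (CG 3))) (CM (CS c_m1) (CM (CS c_qi) (CM (CM (CG 1) (CG 4)) (CA (CM (CG 2) (CG 5)) (CG 6)))))"
definition "ceps = CA (CA (CA (CS c_zero) (CM (CS c_m1) (CM (CS c_qi) (CM (CS c_one) (CS c_zero))))) (CM (CS c_one) (CG 0))) (CM (CS c_m1) (CG 0))"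

lemma comp_co: "red rules_co 10 (np_of_ct (CA cD (CM (CS c_m1) cI))) = []" by code_simp
lemma comp_io: "red rules_co 10 (np_of_ct (CA ciL (CM (CS c_m1) ciR))) = []" by code_simp
lemma comp_eps: "red [] 10 (np_of_ct ceps) = []" by code_simp

definition hC :: "nat \<Rightarrow> nat \<Rightarrow> ((slgen + slgen) + sogen) fa" where
  "hC i v = (if v = 0 then Gen (Inl (Inl (F i))) else if v = 1 then Gen (Inl (Inl (K i)))
     else if v = 2 then Gen (Inl (Inl (E i))) else if v = 3 then Gen (Inl (Inr (F i)))
     else if v = 4 then Gen (Inl (Inr (K i))) else if v = 5 then Gen (Inl (Inr (Kinv i)))
     else if v = 6 then Gen (Inl (Inr (E i))) else Gen (Inr (I i)))"

definition hI :: "nat \<Rightarrow> nat \<Rightarrow> (slgen + slgen) fa" where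
  "hI i v = (if v = 0 then Gen (Inl (F i)) else if v = 1 then Gen (Inl (K i))
     else if v = 2 then Gen (Inl (E i)) else if v = 3 then Gen (Inr (F i))
     else if v = 4 then Gen (Inr (K i)) else if v = 5 then Gen (Inr (Kinv i))
     else Gen (Inr (E i)))"

lemma subst_Gen: "subst Gen a = a" by (induction a) auto

context fixes n :: nat and q :: complex assumes qg: "qgood q"
begin

lemmas cfs' = qgood.cf_simps[OF qg]

lemma rel_ok: assumes "(l, r) \<in> so_rels n q"
  shows "alg_eq (RT n q) (subst (phi_gen n q) l) (subst (phi_gen n q) r)"
proof -
  from assms consider (a) i where "l = Gen (I i)" "r = Scal 0" "\<not> rg n i"
    | (b) i where "l = Add (Add (Mul (Mul (Gen (I (i+1))) (Gen (I (i+1)))) (Gen (I i)))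
                 (Mul (Mul (Gen (I i)) (Gen (I (i+1)))) (Gen (I (i+1)))))
            (Sm (- (q + inverse q)) (Mul (Mul (Gen (I (i+1))) (Gen (I i))) (Gen (I (i+1)))))"
         "r = Sm (-1) (Gen (I i))" "1 \<le> i" "i + 1 \<le> n - 1"
    | (c) i where "l = Add (Add (Mul (Mul (Gen (I i)) (Gen (I i))) (Gen (I (i+1))))
                 (Mul (Mul (Gen (I (i+1))) (Gen (I i))) (Gen (I i))))
            (Sm (- (q + inverse q)) (Mul (Mul (Gen (I i)) (Gen (I (i+1)))) (Gen (I i))))"
         "r = Sm (-1) (Gen (I (i+1)))" "1 \<le> i" "i + 1 \<le> n - 1"
    | (d) i j where "l = Mul (Gen (I i)) (Gen (I j))" "r = Mul (Gen (I j)) (Gen (I i))"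
         "rg n i" "rg n j" "i + 1 < j \<or> j + 1 < i"
    unfolding so_rels_def by blast
  then show ?thesis
  proof cases
    case a then show ?thesis by (auto simp: phi_gen_def alg_eq.refl)
  next
    case b
    have "alg_eq (RT n q) (Add (Add (Mul (Mul (phi_gen n q (I (i+1))) (phi_gen n q (I (i+1)))) (phi_gen n q (I i)))
      (Mul (Mul (phi_gen n q (I i)) (phi_gen n q (I (i+1)))) (phi_gen n q (I (i+1)))))
      (Mul (Scal (- (q + inverse q))) (Mul (Mul (phi_gen n q (I (i+1))) (phi_gen n q (I i))) (phi_gen n q (I (i+1))))))
    (Mul (Scal (-1)) (phi_gen n q (I i)))"
      by (rule L_cub[OF qg]) (use b in auto)
    then show ?thesis using b by (simp add: Sm_def)
  next
    case c
    have "alg_eq (RT n q) (Add (Add (Mul (Mul (phi_gen n q (I i)) (phi_gen n q (I i))) (phi_gen n q (I (i+1))))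
      (Mul (Mul (phi_gen n q (I (i+1))) (phi_gen n q (I i))) (phi_gen n q (I i))))
      (Mul (Scal (- (q + inverse q))) (Mul (Mul (phi_gen n q (I i)) (phi_gen n q (I (i+1)))) (phi_gen n q (I i)))))
    (Mul (Scal (-1)) (phi_gen n q (I (i+1))))"
      by (rule L_cub[OF qg]) (use c in auto)
    then show ?thesis using c by (simp add: Sm_def)
  next
    case d then show ?thesis using L_far[OF qg d(3-5)] by simp
  qed
qed

lemma part1: "extends_to_hom (so_rels n q) (RT n q) (phi_gen n q)"
  unfolding extends_to_hom_def using subst_hom[OF rel_ok] by blast

abbreviation "RT3 \<equiv> tensor_rels (tensor_rels (sl_rels n q) (sl_rels n q)) (so_rels n q)"
abbreviation "RT2 \<equiv> tensor_rels (sl_rels n q) (sl_rels n q)"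

lemma ok_co3: assumes "rg n i" shows "rules_ok RT3 q (hC i) rules_co"
proof -
  have r1: "alg_eq RT3 (Mul (Gen (Inl (Inr (K i)))) (Gen (Inl (Inl (E i))))) (Mul (Gen (Inl (Inl (E i)))) (Gen (Inl (Inr (K i)))))"
    using liftL[OF T_XC[where y="K i" and x="E i" and RA="sl_rels n q" and RB="sl_rels n q"], of "so_rels n q"] by simp
  have r2: "alg_eq RT3 (Mul (Gen (Inl (Inr (K i)))) (Gen (Inl (Inr (Kinv i))))) (Scal 1)"
    using liftL[OF liftR[OF sl_KL[where n=n and a=i and q=q], of "sl_rels n q"], of "so_rels n q"] assms by simp
  show ?thesis unfolding rules_co_def
    by (rule qgood.valid_mk[OF qg]) (simp add: valid_def hC_def cfs' r1 r2)
qed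

lemma ok_io: assumes "rg n i" shows "rules_ok RT2 q (hI i) rules_co"
proof -
  have r1: "alg_eq RT2 (Mul (Gen (Inr (K i))) (Gen (Inl (E i)))) (Mul (Gen (Inl (E i))) (Gen (Inr (K i))))"
    by (rule T_XC)
  have r2: "alg_eq RT2 (Mul (Gen (Inr (K i))) (Gen (Inr (Kinv i)))) (Scal 1)"
    using liftR[OF sl_KL[where n=n and a=i and q=q], of "sl_rels n q"] assms by simp
  show ?thesis unfolding rules_co_def
    by (rule qgood.valid_mk[OF qg]) (simp add: valid_def hI_def cfs' r1 r2)
qed

lemma co_gen: assumes "rg n i"
  shows "alg_eq RT3 (subst (Delta_id n) (phi_gen n q (I i))) (subst (id_phi n q) (phi_gen n q (I i)))"
proof -
  have h: "alg_eq RT3 (ct_ev q (hC i) (CA cD (CM (CS c_m1) cI))) (Scal 0)"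
    by (rule qgood.engine[OF qg ok_co3[OF assms] comp_co])
  have eD: "ct_ev q (hC i) cD = subst (Delta_id n) (phi_gen n q (I i))"
    using assms by (simp add: cD_def hC_def cfs' Delta_id_def sl_Delta_def phi_gen_def iota_gen_def Sub_def Sm_def sl_gen_in_range_def)
  have eI: "ct_ev q (hC i) cI = subst (id_phi n q) (phi_gen n q (I i))"
    using assms by (simp add: cI_def hC_def cfs' id_phi_def phi_gen_def iota_gen_def Sub_def Sm_def)
  show ?thesis
    by (rule ae_eq_from_diff) (use h in \<open>simp only: ct_ev.simps eD eI cfs'\<close>)
qed

lemma io_gen: assumes "rg n i"
  shows "alg_eq RT2 (subst (id_iota n q) (phi_gen n q (I i))) (subst (sl_Delta n) (iota_gen n q (I i)))"
proof -
  have h: "alg_eq RT2 (ct_ev q (hI i) (CA ciL (CM (CS c_m1) ciR))) (Scal 0)"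
    by (rule qgood.engine[OF qg ok_io[OF assms] comp_io])
  have eL: "ct_ev q (hI i) ciL = subst (id_iota n q) (phi_gen n q (I i))"
    using assms by (simp add: ciL_def hI_def cfs' id_iota_def phi_gen_def iota_gen_def Sub_def Sm_def)
  have eR: "ct_ev q (hI i) ciR = subst (sl_Delta n) (iota_gen n q (I i))"
    using assms by (simp add: ciR_def hI_def cfs' sl_Delta_def iota_gen_def Sub_def Sm_def sl_gen_in_range_def)
  show ?thesis
    by (rule ae_eq_from_diff) (use h in \<open>simp only: ct_ev.simps eL eR cfs'\<close>)
qed

lemma eps_gen: assumes "rg n i"
  shows "alg_eq (so_rels n q) (subst (eps_id n) (phi_gen n q (I i))) (Gen (I i))"
proof -
  have ok: "rules_ok (so_rels n q) q (\<lambda>_. Gen (I i)) []" by (simp add: rules_ok_def)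
  have h: "alg_eq (so_rels n q) (ct_ev q (\<lambda>_. Gen (I i)) ceps) (Scal 0)"
    by (rule qgood.engine[OF qg ok comp_eps])
  have e: "ct_ev q (\<lambda>_. Gen (I i)) ceps = Add (subst (eps_id n) (phi_gen n q (I i))) (Mul (Scal (-1)) (Gen (I i)))"
    using assms by (simp add: ceps_def cfs' eps_id_def sl_eps_def phi_gen_def iota_gen_def Sub_def Sm_def sl_gen_in_range_def)
  show ?thesis by (rule ae_eq_from_diff) (use h in \<open>simp only: e\<close>)
qed

lemma part2: "alg_eq RT3 (subst (Delta_id n) (subst (phi_gen n q) a)) (subst (id_phi n q) (subst (phi_gen n q) a))"
  unfolding subst_subst
proof (rule subst_cong_pointwise)
  fix x show "alg_eq RT3 (subst (Delta_id n) (phi_gen n q x)) (subst (id_phi n q) (phi_gen n q x))"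
  proof (cases x)
    case (I i)
    show ?thesis
    proof (cases "rg n i")
      case True then show ?thesis using I co_gen by simp
    next
      case False then show ?thesis using I by (auto simp: phi_gen_def alg_eq.refl)
    qed
  qed
qed

lemma part3: "alg_eq (so_rels n q) (subst (eps_id n) (subst (phi_gen n q) a)) a"
proof -
  have "alg_eq (so_rels n q) (subst (\<lambda>x. subst (eps_id n) (phi_gen n q x)) a) (subst Gen a)"
  proof (rule subst_cong_pointwise)
    fix x show "alg_eq (so_rels n q) (subst (eps_id n) (phi_gen n q x)) (Gen x)"
    proof (cases x)
      case (I i)
      show ?thesis
      proof (cases "rg n i")
        case True then show ?thesis using I eps_gen[OF True] by simp
      next
        case False
        have "alg_eq (so_rels n q) (Gen (I i)) (Scal 0)" by (rule alg_eq.rel) (use False in \<open>auto simp: so_rels_def\<close>)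
        moreover have "phi_gen n q (I i) = Scal 0" using False by (auto simp: phi_gen_def)
        ultimately show ?thesis using I by (simp add: ae_sym)
      qed
    qed
  qed
  then show ?thesis by (simp add: subst_subst subst_Gen)
qed

lemma part4: "alg_eq RT2 (subst (id_iota n q) (subst (phi_gen n q) a)) (subst (sl_Delta n) (subst (iota_gen n q) a))"
  unfolding subst_subst
proof (rule subst_cong_pointwise)
  fix x show "alg_eq RT2 (subst (id_iota n q) (phi_gen n q x)) (subst (sl_Delta n) (iota_gen n q x))"
  proof (cases x)
    case (I i)
    show ?thesis
    proof (cases "rg n i")
      case True then show ?thesis using I io_gen by simp
    next
      case False then show ?thesis using I by (auto simp: phi_gen_def iota_gen_def alg_eq.refl)
    qed
  qed
qed

end

theorem proposition1:
  fixes n :: nat and q :: complex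
  assumes "n \<ge> 2" and "q \<noteq> 0" and "q \<noteq> 1" and "q \<noteq> -1"
    and "\<forall>m::nat. m > 0 \<longrightarrow> q ^ m \<noteq> 1"
  shows "extends_to_hom (so_rels n q) (tensor_rels (sl_rels n q) (so_rels n q)) (phi_gen n q)
    \<and> (\<forall>a. alg_eq (tensor_rels (tensor_rels (sl_rels n q) (sl_rels n q)) (so_rels n q))
            (subst (Delta_id n) (subst (phi_gen n q) a))
            (subst (id_phi n q) (subst (phi_gen n q) a)))
    \<and> (\<forall>a. alg_eq (so_rels n q) (subst (eps_id n) (subst (phi_gen n q) a)) a)
    \<and> (\<forall>a. alg_eq (tensor_rels (sl_rels n q) (sl_rels n q))
            (subst (id_iota n q) (subst (phi_gen n q) a))
            (subst (sl_Delta n) (subst (iota_gen n q) a)))"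
proof -
  have qg: "qgood q" by (rule qgood_of[OF assms(2-4)])
  show ?thesis using part1[OF qg] part2[OF qg] part3[OF qg] part4[OF qg] by blast
qed


end
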